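(* In the 1-sided False Negative regime, let the moldgraph $G$ have $m$ edges and belong to a $\rho$-sparse, minor-closed family of graphs. Then the algorithm SolveSparseFN, run on $G$, performs $O(\rho m)$ queries in expectation and uncovers a realized spanning tree with probability $1$. SolveSparseFN$(G)$: if $G$ has a single vertex, return $\emptyset$. Otherwise let $u$ be a vertex of minimum degree, let $N(u)$ be the collection of super-edges incident to $u$, and let $e=\mathrm{DISCOVER}(N(u))$. Contract $e$ to obtain $G'$ and return $\mathrm{SolveSparseFN}(G')\cup\{e\}$. DISCOVER$(\mathcal{S})$, for a collection $\mathcal{S}=\{E_1,\dots,E_k\}$ of edge sets each equipped with a fixed cyclic order: repeat rounds; in each round, for $i=1,\dots,k$, query the next edge $e$ in the cyclic order of $E_i$, and if the answer is ``Yes'' return $e$.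
   Context: Problem (graph connectivity with noisy queries): a graph $G=(V,E)$, the moldgraph, with $n$ vertices and $m$ edges is given. An adversary selects an arbitrary connected spanning subgraph of $G$ to be realized. The algorithm may query an oracle on any edge $e$ (``Is $e$ realized?''), receiving ``Yes''/``No''; each query costs $1$; answers to distinct queries (including repeated queries of the same edge) are independent. Goal: output a spanning tree of $G$ all of whose edges are realized. In the 1-sided False Negative regime: for a non-realized edge the answer is always ``No''; for a realized edge the answer is ``No'' with a constant probability $p<1/2$ and ``Yes'' with probability $1-p$. Multigraph conventions: during the algorithm graphs may have parallel edges; the set of all parallel edges between two vertices $u,v$ is called a super-edge (a simple edge is a super-edge of size $1$). $N(v)$ is the set of super-edges incident to $v$, and $\deg(v)=|N(v)|$. Contracting an edge $e=\{u,v\}$ replaces $u,v$ by a new vertex adjacent to all former neighbours of $u$ or $v$; all edges parallel to $e$ are deleted (no self-loops), and super-edges that become parallel are merged into one super-edge (their union). Edges keep their identity as edges of the original moldgraph. A graph with $m$ edges and $n$ vertices is $\rho$-sparse if $m\le\rho n$. A graph $H$ is a minor of $G$ if it can be obtained by edge deletions, vertex deletions and edge contractions; a family is minor-closed if it contains all minors of its members. *)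

theory Defs
  imports "HOL-Probability.Probability"
begin

text \<open>A (finite, simple) graph is a pair (V, E): a finite vertex set and a set of
  2-element vertex sets as edges.  Vertices are natural numbers (every finite graph
  is isomorphic to one of these).\<close>

definition is_graph :: "nat set \<Rightarrow> nat set set \<Rightarrow> bool" where
  "is_graph V E \<longleftrightarrow> finite V \<and> (\<forall>e\<in>E. \<exists>a b. a \<in> V \<and> b \<in> V \<and> a \<noteq> b \<and> e = {a, b})"

text \<open>One minor step: delete an edge, delete a vertex (with incident edges), or contract
  an edge {u,v} (the merged vertex is named u; parallel edges are merged, no loops).\<close>

inductive minor_step :: "nat set \<times> nat set set \<Rightarrow> nat set \<times> nat set set \<Rightarrow> bool" where
  del_edge: "e \<in> E \<Longrightarrow> minor_step (V, E - {e}) (V, E)"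
| del_vertex: "v \<in> V \<Longrightarrow> minor_step (V - {v}, {e \<in> E. v \<notin> e}) (V, E)"
| contract: "{u, v} \<in> E \<Longrightarrow> u \<noteq> v \<Longrightarrow>
    minor_step (V - {v}, {(\<lambda>x. if x = v then u else x) ` g | g. g \<in> E \<and> g \<noteq> {u, v}}) (V, E)"

definition is_minor :: "nat set \<times> nat set set \<Rightarrow> nat set \<times> nat set set \<Rightarrow> bool" where
  "is_minor H G \<longleftrightarrow> minor_step\<^sup>*\<^sup>* H G"

definition graph_family :: "(nat set \<times> nat set set) set \<Rightarrow> bool" where
  "graph_family F \<longleftrightarrow> (\<forall>(V, E) \<in> F. is_graph V E)"

definition minor_closed :: "(nat set \<times> nat set set) set \<Rightarrow> bool" where
  "minor_closed F \<longleftrightarrow> (\<forall>G \<in> F. \<forall>H. is_minor H G \<longrightarrow> H \<in> F)"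

definition sparse_graph :: "real \<Rightarrow> nat set \<Rightarrow> nat set set \<Rightarrow> bool" where
  "sparse_graph \<rho> V E \<longleftrightarrow> real (card E) \<le> \<rho> * real (card V)"

definition sparse_family :: "real \<Rightarrow> (nat set \<times> nat set set) set \<Rightarrow> bool" where
  "sparse_family \<rho> F \<longleftrightarrow> (\<forall>(V, E) \<in> F. sparse_graph \<rho> V E)"

definition edge_rel :: "nat set set \<Rightarrow> (nat \<times> nat) set" where
  "edge_rel T = {(a, b). {a, b} \<in> T \<and> a \<noteq> b}"

definition connected_sg :: "nat set \<Rightarrow> nat set set \<Rightarrow> bool" where
  "connected_sg V T \<longleftrightarrow> (\<forall>a\<in>V. \<forall>b\<in>V. (a, b) \<in> (edge_rel T)\<^sup>*)"

text \<open>Acyclic: no edge lies on a cycle, i.e. removing any edge disconnects its endpoints.\<close>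
definition acyclic_sg :: "nat set set \<Rightarrow> bool" where
  "acyclic_sg T \<longleftrightarrow> (\<forall>a b. {a, b} \<in> T \<and> a \<noteq> b \<longrightarrow> (a, b) \<notin> (edge_rel (T - {{a, b}}))\<^sup>*)"

definition spanning_tree :: "nat set \<Rightarrow> nat set set \<Rightarrow> nat set set \<Rightarrow> bool" where
  "spanning_tree V E T \<longleftrightarrow> T \<subseteq> E \<and> connected_sg V T \<and> acyclic_sg T"

text \<open>After contracting the edge set T, the vertices are the connected components
  (classes) of (V,T); the super-edge between two distinct classes X, Y is the set of
  all original edges joining them; edges inside a class have been deleted.\<close>

definition cls :: "nat set \<Rightarrow> nat set set \<Rightarrow> nat \<Rightarrow> nat set" where
  "cls V T a = {b \<in> V. (a, b) \<in> (edge_rel T)\<^sup>*}"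

definition classes :: "nat set \<Rightarrow> nat set set \<Rightarrow> nat set set" where
  "classes V T = cls V T ` V"

definition super_edge :: "nat set set \<Rightarrow> nat set \<Rightarrow> nat set \<Rightarrow> nat set set" where
  "super_edge E X Y = {e \<in> E. \<exists>a\<in>X. \<exists>b\<in>Y. e = {a, b}}"

text \<open>N(X): super-edges incident to the vertex X of G/T; deg(X) = |N(X)|.\<close>
definition nbhd :: "nat set \<Rightarrow> nat set set \<Rightarrow> nat set set \<Rightarrow> nat set \<Rightarrow> nat set set set" where
  "nbhd V E T X = {S. \<exists>Y \<in> classes V T. Y \<noteq> X \<and> S = super_edge E X Y \<and> S \<noteq> {}}"

definition deg :: "nat set \<Rightarrow> nat set set \<Rightarrow> nat set set \<Rightarrow> nat set \<Rightarrow> nat" where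
  "deg V E T X = card (nbhd V E T X)"

text \<open>A policy resolves the arbitrary choices of the algorithm: given the set T of
  edges contracted so far, it returns the collection N(u) of super-edges incident to a
  minimum-degree vertex u of G/T, each super-edge listed in a fixed cyclic order
  (the list, read cyclically starting at its head).  The theorem quantifies over all
  valid policies.\<close>

definition valid_policy :: "nat set \<Rightarrow> nat set set \<Rightarrow> (nat set set \<Rightarrow> nat set list list) \<Rightarrow> bool" where
  "valid_policy V E pol \<longleftrightarrow>
     (\<forall>T \<subseteq> E. 2 \<le> card (classes V T) \<longrightarrow>
        (\<exists>X \<in> classes V T. (\<forall>Y \<in> classes V T. deg V E T X \<le> deg V E T Y)
            \<and> set (map set (pol T)) = nbhd V E T X
            \<and> distinct (map set (pol T))
            \<and> (\<forall>l \<in> set (pol T). distinct l)))"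

text \<open>The j-th query (j = 0,1,2,...) of DISCOVER on the lists L = [E_1,...,E_k]:
  round j div k, set E_(j mod k), next edge in its cyclic order.\<close>
definition rr_query :: "'e list list \<Rightarrow> nat \<Rightarrow> 'e" where
  "rr_query L j = (let k = length L; l = L ! (j mod k) in l ! ((j div k) mod length l))"

text \<open>Oracle randomness: an infinite stream of independent coins, coin number i used by
  the i-th query overall.  The answer to query i on edge e is Yes iff e is realized
  and coin i is True (so a realized edge gets No with probability p, a non-realized
  edge always gets No).  DISCOVER starting at global query index k returns the
  number J such that its (J+1)-th query was the first Yes (or None if it never stops).\<close>
definition discover :: "nat set set \<Rightarrow> nat set list list \<Rightarrow> bool stream \<Rightarrow> nat \<Rightarrow> nat option" where
  "discover R L \<omega> k =
     (if \<exists>j. rr_query L j \<in> R \<and> \<omega> !! (k + j)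
      then Some (LEAST j. rr_query L j \<in> R \<and> \<omega> !! (k + j)) else None)"

text \<open>solve_fn: recursion (with fuel, at most |V| contractions are ever needed); state T
  = contracted edges (= edges returned so far), k = number of queries so far.
  Returns Some (output edge set, total number of queries), or None if it does not halt.\<close>
primrec solve_fn :: "nat set \<Rightarrow> nat set set \<Rightarrow> (nat set set \<Rightarrow> nat set list list) \<Rightarrow>
    nat \<Rightarrow> nat set set \<Rightarrow> nat \<Rightarrow> bool stream \<Rightarrow> (nat set set \<times> nat) option" where
  "solve_fn V R pol 0 T k \<omega> = (if card (classes V T) \<le> 1 then Some (T, k) else None)"
| "solve_fn V R pol (Suc n) T k \<omega> =
     (if card (classes V T) \<le> 1 then Some (T, k)
      else (case discover R (pol T) \<omega> k of
              None \<Rightarrow> None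
            | Some J \<Rightarrow> solve_fn V R pol n (T \<union> {rr_query (pol T) J}) (k + J + 1) \<omega>))"

definition SolveSparseFN :: "nat set \<Rightarrow> nat set set \<Rightarrow> (nat set set \<Rightarrow> nat set list list) \<Rightarrow>
    bool stream \<Rightarrow> (nat set set \<times> nat) option" where
  "SolveSparseFN V R pol \<omega> = solve_fn V R pol (card V) {} 0 \<omega>"

definition num_queries :: "(nat set set \<times> nat) option \<Rightarrow> ennreal" where
  "num_queries r = (case r of Some (T, k) \<Rightarrow> ennreal (real k) | None \<Rightarrow> \<infinity>)"

text \<open>Coin space: each coin is True (answer Yes on a realized edge) with probability 1 - p.\<close>
definition coin_space :: "real \<Rightarrow> bool stream measure" where
  "coin_space p = stream_space (measure_pmf (bernoulli_pmf (1 - p)))"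

end

theory Submission
  imports Defs
begin

definition dfirst :: "nat set set \<Rightarrow> nat set list list \<Rightarrow> nat \<Rightarrow> bool stream \<Rightarrow> nat option" where
  "dfirst R L j \<omega> = (if \<exists>J. rr_query L (j+J) \<in> R \<and> \<omega> !! J
     then Some (LEAST J. rr_query L (j+J) \<in> R \<and> \<omega> !! J) else None)"

lemma discover_dfirst: "discover R L \<omega> k = dfirst R L 0 (sdrop k \<omega>)"
  unfolding discover_def dfirst_def by (simp add: sdrop_snth)

lemma solve_fn_shift:
  "solve_fn V R pol n T k \<omega> = map_option (\<lambda>(T', c). (T', k + c)) (solve_fn V R pol n T 0 (sdrop k \<omega>))"
proof (induction n arbitrary: T k \<omega>)
  case 0
  then show ?case by simp
next
  case (Suc n)
  show ?case
  proof (cases "card (classes V T) \<le> 1")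
    case True
    then show ?thesis by simp
  next
    case False
    have d: "discover R (pol T) \<omega> k = discover R (pol T) (sdrop k \<omega>) 0"
      by (simp add: discover_dfirst)
    show ?thesis
    proof (cases "discover R (pol T) \<omega> k")
      case None
      then show ?thesis using False d by simp
    next
      case (Some J)
      have "solve_fn V R pol n (T \<union> {rr_query (pol T) J}) (k + J + 1) \<omega> =
         map_option (\<lambda>(T', c). (T', k + J + 1 + c)) (solve_fn V R pol n (T \<union> {rr_query (pol T) J}) 0 (sdrop (k + J + 1) \<omega>))"
        using Suc.IH by blast
      moreover have "solve_fn V R pol n (T \<union> {rr_query (pol T) J}) (J + 1) (sdrop k \<omega>) =
         map_option (\<lambda>(T', c). (T', J + 1 + c)) (solve_fn V R pol n (T \<union> {rr_query (pol T) J}) 0 (sdrop (J + 1) (sdrop k \<omega>)))"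
        by (rule Suc.IH)
      moreover have "sdrop (J + 1) (sdrop k \<omega>) = sdrop (k + J + 1) \<omega>"
        by (simp only: sdrop_add, simp add: algebra_simps)
      moreover have d2: "discover R (pol T) (sdrop k \<omega>) 0 = Some J" using Some d by simp
      ultimately show ?thesis using False Some
        by (simp del: sdrop.simps add: option.map_comp o_def case_prod_beta add.assoc cong: option.map_cong)
    qed
  qed
qed

definition qc :: "nat set \<Rightarrow> nat set set \<Rightarrow> (nat set set \<Rightarrow> nat set list list) \<Rightarrow> nat \<Rightarrow> nat set set \<Rightarrow> bool stream \<Rightarrow> ennreal" where
  "qc V R pol n T \<omega> = num_queries (solve_fn V R pol n T 0 \<omega>)"

lemma num_queries_shift:
  "num_queries (solve_fn V R pol n T k \<omega>) = of_nat k + qc V R pol n T (sdrop k \<omega>)"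
  unfolding qc_def
  by (subst solve_fn_shift) (auto simp: num_queries_def ennreal_of_nat_eq_real_of_nat split: option.splits)

definition dc :: "nat set \<Rightarrow> nat set set \<Rightarrow> (nat set set \<Rightarrow> nat set list list) \<Rightarrow> nat \<Rightarrow> nat set set \<Rightarrow> nat \<Rightarrow> bool stream \<Rightarrow> ennreal" where
  "dc V R pol n T j \<omega> = (case dfirst R (pol T) j \<omega> of None \<Rightarrow> \<infinity>
      | Some J \<Rightarrow> of_nat (J + 1) + qc V R pol n (insert (rr_query (pol T) (j + J)) T) (sdrop (J + 1) \<omega>))"

lemma qc_0: "qc V R pol 0 T \<omega> = (if card (classes V T) \<le> 1 then 0 else \<infinity>)"
  by (simp add: qc_def num_queries_def)

lemma qc_Suc: "qc V R pol (Suc n) T \<omega> = (if card (classes V T) \<le> 1 then 0 else dc V R pol n T 0 \<omega>)"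
proof (cases "card (classes V T) \<le> 1")
  case True
  then show ?thesis by (simp add: qc_def num_queries_def)
next
  case False
  have d: "discover R (pol T) \<omega> 0 = dfirst R (pol T) 0 \<omega>" by (simp add: discover_dfirst)
  show ?thesis
  proof (cases "dfirst R (pol T) 0 \<omega>")
    case None
    then show ?thesis using False d by (simp add: qc_def num_queries_def dc_def)
  next
    case (Some J)
    have "num_queries (solve_fn V R pol n (T \<union> {rr_query (pol T) J}) (J + 1) \<omega>) =
       of_nat (J+1) + qc V R pol n (T \<union> {rr_query (pol T) J}) (sdrop (J+1) \<omega>)"
      by (rule num_queries_shift)
    then show ?thesis using False d Some by (simp add: qc_def dc_def)
  qed
qed

lemma dfirst_Stream: "dfirst R L j (x ## \<omega>) =
   (if rr_query L j \<in> R \<and> x then Some 0 else map_option Suc (dfirst R L (Suc j) \<omega>))"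
proof (cases "rr_query L j \<in> R \<and> x")
  case True
  then show ?thesis unfolding dfirst_def
    by (auto intro!: Least_equality exI[of _ 0])
next
  case False
  have e: "(\<exists>J. rr_query L (j+J) \<in> R \<and> (x##\<omega>) !! J) \<longleftrightarrow> (\<exists>J. rr_query L (Suc j+J) \<in> R \<and> \<omega> !! J)"
  proof
    assume "\<exists>J. rr_query L (j+J) \<in> R \<and> (x##\<omega>) !! J"
    then obtain J where J: "rr_query L (j+J) \<in> R \<and> (x##\<omega>) !! J" by blast
    then obtain J' where "J = Suc J'" using False by (cases J) auto
    then show "\<exists>J. rr_query L (Suc j+J) \<in> R \<and> \<omega> !! J" using J by auto
  next
    assume "\<exists>J. rr_query L (Suc j+J) \<in> R \<and> \<omega> !! J"
    then obtain J where J: "rr_query L (Suc j+J) \<in> R \<and> \<omega> !! J" by blast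
    then show "\<exists>J. rr_query L (j+J) \<in> R \<and> (x##\<omega>) !! J" by (intro exI[of _ "Suc J"]) auto
  qed
  show ?thesis
  proof (cases "\<exists>J. rr_query L (Suc j+J) \<in> R \<and> \<omega> !! J")
    case True
    have "(LEAST J. rr_query L (j+J) \<in> R \<and> (x##\<omega>) !! J) = Suc (LEAST J. rr_query L (Suc j+J) \<in> R \<and> \<omega> !! J)"
    proof -
      obtain J where J: "rr_query L (Suc j+J) \<in> R \<and> \<omega> !! J" using True by blast
      have "(LEAST J. rr_query L (j+J) \<in> R \<and> (x##\<omega>) !! J) = Suc (LEAST m. rr_query L (j+Suc m) \<in> R \<and> (x##\<omega>) !! Suc m)"
        by (rule Least_Suc[where n="Suc J"]) (use J False in auto)
      then show ?thesis by simp
    qed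
    then show ?thesis using False True e unfolding dfirst_def by auto
  next
    case f2: False
    then show ?thesis using False e unfolding dfirst_def by auto
  qed
qed

lemma dc_Stream: "dc V R pol n T j (x ## \<omega>) =
   (if rr_query (pol T) j \<in> R \<and> x then 1 + qc V R pol n (insert (rr_query (pol T) j) T) \<omega>
    else 1 + dc V R pol n T (Suc j) \<omega>)"
  unfolding dc_def dfirst_Stream
  by (auto split: option.splits simp: add.assoc ennreal_of_nat_eq_real_of_nat)

abbreviation "CS q \<equiv> stream_space (measure_pmf (bernoulli_pmf q))"

lemma meas_snth_pred: "(\<lambda>\<omega>. \<omega> !! J) \<in> measurable (CS q) (count_space UNIV)"
proof -
  have "(\<lambda>\<omega>. \<omega> !! J) \<in> measurable (CS q) (measure_pmf (bernoulli_pmf q))" by measurable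
  then show ?thesis by (simp add: measurable_cong_sets)
qed

lemma meas_dfirst[measurable]: "dfirst R L j \<in> measurable (CS q) (count_space UNIV)"
  unfolding dfirst_def[abs_def]
  using meas_snth_pred[measurable] by measurable

lemma meas_discover: "(\<lambda>\<omega>. discover R L \<omega> k) \<in> measurable (CS q) (count_space UNIV)"
  unfolding discover_dfirst by measurable

lemma meas_solve: "(\<lambda>\<omega>. solve_fn V R pol n T k \<omega>) \<in> measurable (CS q) (count_space UNIV)"
proof (induction n arbitrary: T k)
  case 0
  then show ?case by simp
next
  case (Suc n)
  show ?case
  proof (cases "card (classes V T) \<le> 1")
    case True
    then show ?thesis by simp
  next
    case False
    define F where "F = (\<lambda>i \<omega>. case i of None \<Rightarrow> None | Some J \<Rightarrow> solve_fn V R pol n (T \<union> {rr_query (pol T) J}) (k + J + 1) \<omega>)"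
    have m: "(\<lambda>\<omega>. F i \<omega>) \<in> measurable (CS q) (count_space UNIV)" if "i \<in> UNIV" for i
      unfolding F_def by (cases i) (auto simp: Suc.IH)
    have "(\<lambda>\<omega>. F (discover R (pol T) \<omega> k) \<omega>) \<in> measurable (CS q) (count_space UNIV)"
      by (rule measurable_compose_countable'[OF m meas_discover]) auto
    then show ?thesis using False by (simp add: F_def)
  qed
qed

lemma meas_qc[measurable]: "qc V R pol n T \<in> borel_measurable (CS q)"
proof -
  have "(\<lambda>r. num_queries r) \<in> measurable (count_space UNIV) borel" by simp
  from measurable_compose[OF meas_solve this] show ?thesis unfolding qc_def[abs_def] .
qed

lemma meas_dc[measurable]: "dc V R pol n T j \<in> borel_measurable (CS q)"
proof -
  define F where "F = (\<lambda>i \<omega>. case i of None \<Rightarrow> \<infinity> | Some J \<Rightarrow> of_nat (J + 1) + qc V R pol n (insert (rr_query (pol T) (j + J)) T) (sdrop (J + 1) \<omega>))"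
  have m: "(\<lambda>\<omega>. F i \<omega>) \<in> borel_measurable (CS q)" if "i \<in> UNIV" for i
    unfolding F_def by (cases i) auto
  have "(\<lambda>\<omega>. F (dfirst R (pol T) j \<omega>) \<omega>) \<in> borel_measurable (CS q)"
    by (rule measurable_compose_countable'[OF m meas_dfirst]) auto
  then show ?thesis unfolding dc_def[abs_def] F_def by simp
qed

definition dd :: "nat \<Rightarrow> nat \<Rightarrow> nat \<Rightarrow> nat" where
  "dd M c j = nat ((int c - int j) mod int M) + 1"

lemma dd_bounds: "0 < M \<Longrightarrow> 1 \<le> dd M c j \<and> dd M c j \<le> M"
proof -
  assume M: "0 < M"
  have "0 \<le> (int c - int j) mod int M" "(int c - int j) mod int M < int M" using M by auto
  then show ?thesis unfolding dd_def by linarith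
qed

lemma dd_zero_iff: "0 < M \<Longrightarrow> c < M \<Longrightarrow> ((int c - int j) mod int M = 0) \<longleftrightarrow> j mod M = c"
proof -
  assume M: "0 < M" and c: "c < M"
  have "((int c - int j) mod int M = 0) \<longleftrightarrow> int M dvd (int c - int j)" by (rule mod_eq_0_iff_dvd)
  also have "\<dots> \<longleftrightarrow> int c mod int M = int j mod int M" by (rule mod_eq_dvd_iff[symmetric])
  also have "\<dots> \<longleftrightarrow> c mod M = j mod M" by (metis of_nat_eq_iff of_nat_mod)
  also have "\<dots> \<longleftrightarrow> j mod M = c" using c by auto
  finally show ?thesis .
qed

lemma dd_step: "(int c - int (Suc j)) mod int M = ((int c - int j) mod int M - 1) mod int M"
proof -
  have "int c - int (Suc j) = (int c - int j) - 1" by simp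
  then show ?thesis by (metis mod_diff_left_eq)
qed

lemma dd_hit: "0 < M \<Longrightarrow> c < M \<Longrightarrow> j mod M = c \<Longrightarrow> dd M c j = 1 \<and> dd M c (Suc j) = M"
proof -
  assume a: "0 < M" "c < M" "j mod M = c"
  then have z: "(int c - int j) mod int M = 0" using dd_zero_iff[OF a(1) a(2), of j] by simp
  have "(int c - int (Suc j)) mod int M = (- 1) mod int M" using dd_step z by simp
  also have "\<dots> = int M - 1"
  proof -
    have "(- 1) mod int M = (int M - 1) mod int M" by (metis minus_mod_self1 mod_minus_eq)
    also have "\<dots> = int M - 1" using a(1) by (intro mod_pos_pos_trivial) auto
    finally show ?thesis .
  qed
  finally have "(int c - int (Suc j)) mod int M = int M - 1" .
  then have "dd M c (Suc j) = nat (int M - 1) + 1" unfolding dd_def by (simp only:)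
  moreover have "dd M c j = nat 0 + 1" using z unfolding dd_def by (simp only:)
  ultimately show ?thesis using a(1) by linarith
qed

lemma dd_miss: "0 < M \<Longrightarrow> c < M \<Longrightarrow> j mod M \<noteq> c \<Longrightarrow> dd M c (Suc j) + 1 = dd M c j"
proof -
  assume a: "0 < M" "c < M" "j mod M \<noteq> c"
  define x where "x = (int c - int j) mod int M"
  have z: "x \<noteq> 0" using dd_zero_iff[OF a(1) a(2), of j] a(3) unfolding x_def by simp
  have p: "0 \<le> x" "x < int M" using a(1) unfolding x_def by auto
  have "(int c - int (Suc j)) mod int M = (x - 1) mod int M" using dd_step unfolding x_def by simp
  also have "\<dots> = x - 1" using z p by (intro mod_pos_pos_trivial) auto
  finally have "(int c - int (Suc j)) mod int M = x - 1" .
  then have "dd M c (Suc j) = nat (x - 1) + 1" unfolding dd_def by (simp only:)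
  moreover have "dd M c j = nat x + 1" unfolding dd_def x_def by (simp only:)
  ultimately show ?thesis using z p by linarith
qed

lemma ennreal_lin: "0 \<le> a \<Longrightarrow> 0 \<le> b \<Longrightarrow> 0 \<le> p \<Longrightarrow> p \<le> 1 \<Longrightarrow>
   (1 + ennreal a) * ennreal (1 - p) + (1 + ennreal b) * ennreal p = ennreal ((1 + a) * (1 - p) + (1 + b) * p)"
proof -
  assume a: "0 \<le> a" "0 \<le> b" "0 \<le> p" "p \<le> 1"
  have 1: "1 + ennreal a = ennreal (1 + a)" "1 + ennreal b = ennreal (1 + b)" using a by simp_all
  have 2: "ennreal (1 + a) * ennreal (1 - p) = ennreal ((1 + a) * (1 - p))"
    using a by (simp add: ennreal_mult)
  have 3: "ennreal (1 + b) * ennreal p = ennreal ((1 + b) * p)"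
    using a by (simp add: ennreal_mult)
  show ?thesis unfolding 1 2 3 using a by (simp add: ennreal_plus[symmetric] del: ennreal_plus)
qed

lemma drift_real1:
  fixes p a B K dj :: real
  assumes "0 \<le> p" "p < 1" "a \<le> B" "K * (1 - p) = S * p" "dj = 1"
  shows "(1 + a) * (1 - p) + (1 + (B + S + K)) * p \<le> B + dj + K"
proof -
  have "(1 + a) * (1 - p) \<le> (1 + B) * (1 - p)" using assms by (intro mult_right_mono) auto
  then show ?thesis using assms by (simp add: algebra_simps)
qed

lemma drift_real2:
  fixes p a B K dj :: real
  assumes "0 \<le> p" "p < 1" "a \<le> B" "0 \<le> K" "1 \<le> dj"
  shows "(1 + a) * (1 - p) + (1 + (B + (dj - 1) + K)) * p \<le> B + dj + K"
proof -
  have "(1 + a) * (1 - p) \<le> (1 + B) * (1 - p)" using assms by (intro mult_right_mono) auto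
  moreover have "0 \<le> (dj - 1) * (1 - p)" using assms by auto
  moreover have "0 \<le> K * (1 - p)" using assms by auto
  ultimately show ?thesis using assms by (simp add: algebra_simps)
qed

lemma min_Suc_ennreal: "min (1 + a) (of_nat (Suc N)) = 1 + min a (of_nat N :: ennreal)"
proof -
  have e: "(of_nat (Suc N) :: ennreal) = 1 + of_nat N" by simp
  show ?thesis unfolding e
  proof (cases "a \<le> of_nat N")
    case True
    then show "min (1 + a) (1 + of_nat N) = 1 + min a (of_nat N)" by (simp add: add_left_mono min_def)
  next
    case False
    then have "1 + of_nat N \<le> 1 + a" by (simp add: add_left_mono)
    then show "min (1 + a) (1 + of_nat N) = 1 + min a (of_nat N)" using False by (simp add: min_def)
  qed
qed

lemma int_step:
  assumes [measurable]: "f \<in> borel_measurable (CS q)"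
  shows "(\<integral>\<^sup>+\<omega>. min (1 + f \<omega>) (of_nat (Suc N)) \<partial>CS q) = 1 + (\<integral>\<^sup>+\<omega>. min (f \<omega>) (of_nat N) \<partial>CS q)"
proof -
  interpret P: prob_space "CS q"
    by (rule prob_space.prob_space_stream_space) (rule prob_space_measure_pmf)
  have "(\<integral>\<^sup>+\<omega>. min (1 + f \<omega>) (of_nat (Suc N)) \<partial>CS q) = (\<integral>\<^sup>+\<omega>. 1 + min (f \<omega>) (of_nat N) \<partial>CS q)"
    by (simp only: min_Suc_ennreal)
  also have "\<dots> = (\<integral>\<^sup>+\<omega>. 1 \<partial>CS q) + (\<integral>\<^sup>+\<omega>. min (f \<omega>) (of_nat N) \<partial>CS q)"
    by (rule nn_integral_add) auto
  also have "(\<integral>\<^sup>+\<omega>. 1 \<partial>CS q) = 1" by (simp add: P.emeasure_space_1)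
  finally show ?thesis .
qed

lemma stream_decomp:
  assumes [measurable]: "f \<in> borel_measurable (CS q)"
  shows "(\<integral>\<^sup>+\<omega>. f \<omega> \<partial>CS q) = (\<integral>\<^sup>+x. (\<integral>\<^sup>+\<omega>. f (x ## \<omega>) \<partial>CS q) \<partial>measure_pmf (bernoulli_pmf q))"
  by (rule prob_space.nn_integral_stream_space) (auto intro: prob_space_measure_pmf)

definition pg :: "nat set set \<Rightarrow> (nat set set \<Rightarrow> nat set list list) \<Rightarrow> (nat set set \<Rightarrow> bool) \<Rightarrow> nat set \<Rightarrow>
   (nat set set \<Rightarrow> nat) \<Rightarrow> real \<Rightarrow> nat set set \<Rightarrow> nat \<Rightarrow> nat \<Rightarrow> bool" where
 "pg R pol good V m \<rho> T s c \<longleftrightarrow> (1 \<le> length (pol T) \<and> real (length (pol T)) \<le> 2*\<rho> \<and> 1 \<le> s \<and> c < length (pol T) * s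
    \<and> (\<forall>j. j mod (length (pol T) * s) = c \<longrightarrow> rr_query (pol T) j \<in> R) \<and> s \<le> m T
    \<and> (\<forall>J. rr_query (pol T) J \<in> R \<longrightarrow> good (insert (rr_query (pol T) J) T)
          \<and> card (classes V (insert (rr_query (pol T) J) T)) < card (classes V T)
          \<and> m (insert (rr_query (pol T) J) T) + s \<le> m T))"

context
  fixes V :: "nat set" and R :: "nat set set" and pol :: "nat set set \<Rightarrow> nat set list list"
    and good :: "nat set set \<Rightarrow> bool" and m :: "nat set set \<Rightarrow> nat" and \<rho> p :: real
  assumes p0: "0 \<le> p" and p1: "p < 1/2"
  and H: "\<And>T. good T \<Longrightarrow> 2 \<le> card (classes V T) \<Longrightarrow> \<exists>s c. pg R pol good V m \<rho> T s c"
begin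

definition sT where "sT T = fst (SOME sc. pg R pol good V m \<rho> T (fst sc) (snd sc))"
definition cT where "cT T = snd (SOME sc. pg R pol good V m \<rho> T (fst sc) (snd sc))"

lemma pg_sc: "good T \<Longrightarrow> 2 \<le> card (classes V T) \<Longrightarrow> pg R pol good V m \<rho> T (sT T) (cT T)"
proof -
  assume "good T" "2 \<le> card (classes V T)"
  then obtain s c where "pg R pol good V m \<rho> T s c" using H by blast
  then have "\<exists>sc. pg R pol good V m \<rho> T (fst sc) (snd sc)" by (intro exI[of _ "(s, c)"]) simp
  from someI_ex[OF this] show ?thesis unfolding sT_def cT_def .
qed

definition Phi where
  "Phi T j = 4*\<rho>*(real (m T) - real (sT T)) + real (dd (length (pol T) * sT T) (cT T) j)
     + real (length (pol T) * sT T) * p / (1 - p)"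

lemma rho_nonneg: "good T \<Longrightarrow> 2 \<le> card (classes V T) \<Longrightarrow> 1/2 \<le> \<rho>"
  using pg_sc[of T] unfolding pg_def by auto

lemma Phi_nonneg: assumes "good T" "2 \<le> card (classes V T)" shows "0 \<le> Phi T j"
proof -
  have pg: "pg R pol good V m \<rho> T (sT T) (cT T)" using pg_sc assms by blast
  have r: "0 \<le> \<rho>" using rho_nonneg assms by force
  have "0 \<le> 4*\<rho>*(real (m T) - real (sT T))" using pg r unfolding pg_def by auto
  moreover have "0 \<le> real (length (pol T) * sT T) * p / (1 - p)" using p0 p1 by auto
  ultimately show ?thesis unfolding Phi_def by simp
qed

lemma Phi0: assumes "good T" "2 \<le> card (classes V T)" shows "Phi T 0 \<le> 4*\<rho>*real (m T)"
proof -
  have pg: "pg R pol good V m \<rho> T (sT T) (cT T)" using pg_sc assms by blast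
  define k where "k = length (pol T)"
  define s where "s = sT T"
  have k: "1 \<le> k" "real k \<le> 2*\<rho>" "1 \<le> s" "s \<le> m T" using pg unfolding pg_def k_def s_def by auto
  have "dd (k * s) (cT T) 0 \<le> k * s" using dd_bounds[of "k * s"] k by auto
  then have 1: "real (dd (k * s) (cT T) 0) \<le> real k * real s" by (metis of_nat_le_iff of_nat_mult)
  have "p / (1 - p) \<le> 1" using p0 p1 by (simp add: divide_le_eq)
  then have 2: "real (k * s) * p / (1 - p) \<le> real k * real s"
    using mult_left_mono[of "p / (1 - p)" 1 "real (k * s)"] by simp
  have 3: "real k * real s \<le> 2 * \<rho> * real s" using k by (intro mult_right_mono) auto
  show ?thesis unfolding Phi_def k_def[symmetric] s_def[symmetric] using 1 2 3 by (simp add: algebra_simps)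
qed

lemma qc_bound:
  assumes IH: "\<And>n T j. good T \<Longrightarrow> 2 \<le> card (classes V T) \<Longrightarrow> card (classes V T) \<le> n + 2 \<Longrightarrow>
     (\<integral>\<^sup>+\<omega>. min (dc V R pol n T j \<omega>) (of_nat N) \<partial>CS (1-p)) \<le> ennreal (Phi T j)"
  and g: "good T" and c: "card (classes V T) \<le> n + 1"
  shows "(\<integral>\<^sup>+\<omega>. min (qc V R pol n T \<omega>) (of_nat N) \<partial>CS (1-p)) \<le> ennreal (4*\<rho>*real (m T))"
proof (cases "card (classes V T) \<le> 1")
  case True
  then have "qc V R pol n T \<omega> = 0" for \<omega> by (cases n) (auto simp: qc_0 qc_Suc)
  then show ?thesis by simp
next
  case False
  then obtain n' where n: "n = Suc n'" using c by (cases n) auto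
  have "(\<integral>\<^sup>+\<omega>. min (qc V R pol n T \<omega>) (of_nat N) \<partial>CS (1-p)) = (\<integral>\<^sup>+\<omega>. min (dc V R pol n' T 0 \<omega>) (of_nat N) \<partial>CS (1-p))"
    using False n by (simp add: qc_Suc)
  also have "\<dots> \<le> ennreal (Phi T 0)" using IH[of T n' 0] g c False n by simp
  also have "\<dots> \<le> ennreal (4*\<rho>*real (m T))" using Phi0[of T] g False by (intro ennreal_leI) simp
  finally show ?thesis .
qed

lemma dc_bound:
  "good T \<Longrightarrow> 2 \<le> card (classes V T) \<Longrightarrow> card (classes V T) \<le> n + 2 \<Longrightarrow>
     (\<integral>\<^sup>+\<omega>. min (dc V R pol n T j \<omega>) (of_nat N) \<partial>CS (1-p)) \<le> ennreal (Phi T j)"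
proof (induction N arbitrary: n T j)
  case 0
  then show ?case by simp
next
  case (Suc N)
  note IH = Suc.IH
  have g: "good T" and c2: "2 \<le> card (classes V T)" and cn: "card (classes V T) \<le> n + 2" using Suc.prems by auto
  have pg: "pg R pol good V m \<rho> T (sT T) (cT T)" using pg_sc g c2 by blast
  define L where "L = pol T"
  define e where "e = rr_query L j"
  define k where "k = length L"
  define s where "s = sT T"
  define c where "c = cT T"
  have pgs: "1 \<le> k" "real k \<le> 2*\<rho>" "1 \<le> s" "c < k * s" "\<And>j. j mod (k * s) = c \<Longrightarrow> rr_query L j \<in> R" "s \<le> m T"
    "\<And>J. rr_query L J \<in> R \<Longrightarrow> good (insert (rr_query L J) T)
          \<and> card (classes V (insert (rr_query L J) T)) < card (classes V T)
          \<and> m (insert (rr_query L J) T) + s \<le> m T"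
    using pg unfolding pg_def L_def[symmetric] k_def[symmetric] s_def[symmetric] c_def[symmetric] by auto
  have ks: "0 < k * s" using pgs by auto
  have r: "0 \<le> \<rho>" using pgs by auto
  define I1 where "I1 = (\<integral>\<^sup>+\<omega>. min (qc V R pol n (insert e T) \<omega>) (of_nat N) \<partial>CS (1-p))"
  define I2 where "I2 = (\<integral>\<^sup>+\<omega>. min (dc V R pol n T (Suc j) \<omega>) (of_nat N) \<partial>CS (1-p))"
  define G where "G = (\<lambda>x. if e \<in> R \<and> x then 1 + I1 else 1 + I2)"
  have "(\<integral>\<^sup>+\<omega>. min (dc V R pol n T j \<omega>) (of_nat (Suc N)) \<partial>CS (1-p))
      = (\<integral>\<^sup>+x. (\<integral>\<^sup>+\<omega>. min (dc V R pol n T j (x ## \<omega>)) (of_nat (Suc N)) \<partial>CS (1-p)) \<partial>measure_pmf (bernoulli_pmf (1-p)))"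
    by (rule stream_decomp) measurable
  also have "\<dots> = (\<integral>\<^sup>+x. G x \<partial>measure_pmf (bernoulli_pmf (1-p)))"
  proof (rule nn_integral_cong)
    fix x
    show "(\<integral>\<^sup>+\<omega>. min (dc V R pol n T j (x ## \<omega>)) (of_nat (Suc N)) \<partial>CS (1-p)) = G x"
    proof (cases "e \<in> R \<and> x")
      case True
      then show ?thesis unfolding G_def I1_def using True
        by (simp only: dc_Stream L_def[symmetric] e_def[symmetric] simp_thms if_True int_step[OF meas_qc])
    next
      case False
      then show ?thesis unfolding G_def I2_def using False
        by (simp only: dc_Stream L_def[symmetric] e_def[symmetric] simp_thms if_False int_step[OF meas_dc])
    qed
  qed
  also have "\<dots> = G True * ennreal (1-p) + G False * ennreal (1 - (1 - p))"
    using p0 p1 by (intro nn_integral_bernoulli_pmf) auto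
  also have "\<dots> = G True * ennreal (1-p) + G False * ennreal p" by simp
  also have "\<dots> \<le> ennreal (Phi T j)"
  proof (cases "e \<in> R")
    case True
    have ge: "good (insert e T)" "card (classes V (insert e T)) < card (classes V T)" "m (insert e T) + s \<le> m T"
      using pgs(7)[of j] True unfolding e_def by auto
    have "I1 \<le> ennreal (4*\<rho>*real (m (insert e T)))" unfolding I1_def
      by (rule qc_bound[OF _ ge(1)]) (use IH ge cn in auto)
    moreover have "I2 \<le> ennreal (Phi T (Suc j))" unfolding I2_def by (rule IH) (use g c2 cn in auto)
    ultimately have "G True * ennreal (1-p) + G False * ennreal p \<le>
       (1 + ennreal (4*\<rho>*real (m (insert e T)))) * ennreal (1-p) + (1 + ennreal (Phi T (Suc j))) * ennreal p"
      unfolding G_def using True by (intro add_mono mult_right_mono) auto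
    also have "\<dots> = ennreal ((1 + 4*\<rho>*real (m (insert e T))) * (1-p) + (1 + Phi T (Suc j)) * p)"
      using p0 p1 r Phi_nonneg[OF g c2] by (intro ennreal_lin) auto
    also have "\<dots> \<le> ennreal (Phi T j)"
    proof (intro ennreal_leI)
      define B where "B = 4*\<rho>*(real (m T) - real s)"
      define K where "K = real (k * s) * p / (1 - p)"
      have a: "4*\<rho>*real (m (insert e T)) \<le> B" unfolding B_def using ge(3) r
        by (intro mult_left_mono) auto
      have K: "K * (1 - p) = real (k * s) * p" "0 \<le> K" unfolding K_def using p0 p1 by auto
      have Pj: "Phi T j = B + real (dd (k * s) c j) + K" and Psj: "Phi T (Suc j) = B + real (dd (k * s) c (Suc j)) + K"
        unfolding Phi_def B_def K_def k_def s_def c_def L_def by simp_all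
      show "(1 + 4*\<rho>*real (m (insert e T))) * (1-p) + (1 + Phi T (Suc j)) * p \<le> Phi T j"
      proof (cases "j mod (k * s) = c")
        case True
        then have "dd (k * s) c j = 1" "dd (k * s) c (Suc j) = k * s" using dd_hit[OF ks pgs(4)] by auto
        then show ?thesis unfolding Pj Psj using drift_real1[OF p0 _ a K(1)] p1 by simp
      next
        case False
        then have "dd (k * s) c (Suc j) + 1 = dd (k * s) c j" using dd_miss[OF ks pgs(4)] by auto
        then have "real (dd (k * s) c (Suc j)) = real (dd (k * s) c j) - 1" by linarith
        moreover have "1 \<le> real (dd (k * s) c j)" using dd_bounds[OF ks] by simp
        ultimately show ?thesis unfolding Pj Psj using drift_real2[OF p0 _ a K(2)] p1 by simp
      qed
    qed
    finally show ?thesis .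
  next
    case False
    have I2: "I2 \<le> ennreal (Phi T (Suc j))" unfolding I2_def by (rule IH) (use g c2 cn in auto)
    have "G True * ennreal (1-p) + G False * ennreal p = (1 + I2) * (ennreal (1-p) + ennreal p)"
      unfolding G_def using False by (simp add: distrib_left)
    also have "\<dots> = 1 + I2" using p0 p1 by (simp add: ennreal_plus[symmetric] del: ennreal_plus)
    also have "\<dots> \<le> 1 + ennreal (Phi T (Suc j))" using I2 by (simp add: add_left_mono)
    also have "\<dots> = ennreal (1 + Phi T (Suc j))" using Phi_nonneg[OF g c2] by simp
    also have "\<dots> \<le> ennreal (Phi T j)"
    proof (intro ennreal_leI)
      have nc: "j mod (k * s) \<noteq> c" using pgs(5)[of j] False unfolding e_def by auto
      then have "dd (k * s) c (Suc j) + 1 = dd (k * s) c j" using dd_miss[OF ks pgs(4)] by auto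
      then show "1 + Phi T (Suc j) \<le> Phi T j" unfolding Phi_def k_def[symmetric] s_def[symmetric] c_def[symmetric] L_def[symmetric]
        by (simp add: algebra_simps)
    qed
    finally show ?thesis .
  qed
  finally show ?case .
qed

end

abbreviation rt :: "nat set set \<Rightarrow> (nat \<times> nat) set" where "rt T \<equiv> (edge_rel T)\<^sup>*"

lemma edge_rel_sym: "(a, b) \<in> edge_rel T \<Longrightarrow> (b, a) \<in> edge_rel T"
  unfolding edge_rel_def by (auto simp: insert_commute)

lemma rt_sym: "(a, b) \<in> rt T \<Longrightarrow> (b, a) \<in> rt T"
proof (induction rule: rtrancl_induct)
  case base then show ?case by simp
next
  case (step y z)
  then show ?case by (meson converse_rtrancl_into_rtrancl edge_rel_sym)
qed

lemma rt_trans: "(a, b) \<in> rt T \<Longrightarrow> (b, c) \<in> rt T \<Longrightarrow> (a, c) \<in> rt T"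
  by (rule rtrancl_trans)

lemma edge_rel_mono: "T \<subseteq> T' \<Longrightarrow> edge_rel T \<subseteq> edge_rel T'"
  unfolding edge_rel_def by auto

lemma rt_mono: "T \<subseteq> T' \<Longrightarrow> (a, b) \<in> rt T \<Longrightarrow> (a, b) \<in> rt T'"
  using rtrancl_mono[OF edge_rel_mono] by blast

lemma edge_in_rt: "{a, b} \<in> T \<Longrightarrow> (a, b) \<in> rt T"
  by (cases "a = b") (auto simp: edge_rel_def intro: r_into_rtrancl)

lemma edge_rel_insert: "a \<noteq> b \<Longrightarrow> edge_rel (insert {a, b} T) = edge_rel T \<union> {(a, b), (b, a)}"
  unfolding edge_rel_def by (auto simp: doubleton_eq_iff insert_commute)

lemma rt_insert:
  assumes "(x, y) \<in> rt (insert {a, b} T)"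
  shows "(x, y) \<in> rt T \<or> ((x, a) \<in> rt T \<and> (b, y) \<in> rt T) \<or> ((x, b) \<in> rt T \<and> (a, y) \<in> rt T)"
proof (cases "a = b")
  case True
  then have "edge_rel (insert {a, b} T) = edge_rel T" unfolding edge_rel_def by auto
  then show ?thesis using assms by simp
next
  case False
  show ?thesis using assms
  proof (induction rule: rtrancl_induct)
    case base then show ?case by simp
  next
    case (step y z)
    from step(2) have "(y, z) \<in> edge_rel T \<or> (y, z) = (a, b) \<or> (y, z) = (b, a)"
      using edge_rel_insert[OF False] by auto
    then show ?case
    proof (elim disjE)
      assume yz: "(y, z) \<in> edge_rel T"
      then show ?thesis using step(3) by (blast intro: rtrancl_into_rtrancl)
    next
      assume yz: "(y, z) = (a, b)"
      then show ?thesis using step(3) by auto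
    next
      assume yz: "(y, z) = (b, a)"
      then show ?thesis using step(3) by auto
    qed
  qed
qed

lemma rt_insert_edge: "(a, b) \<in> rt (insert {a, b} T)"
  by (rule edge_in_rt) simp

lemma rt_insert_mono: "(x, y) \<in> rt T \<Longrightarrow> (x, y) \<in> rt (insert e T)"
  by (rule rt_mono[of T]) auto

lemma rt_insert_iff:
  "(x, y) \<in> rt (insert {a, b} T) \<longleftrightarrow>
    (x, y) \<in> rt T \<or> ((x, a) \<in> rt T \<and> (b, y) \<in> rt T) \<or> ((x, b) \<in> rt T \<and> (a, y) \<in> rt T)"
proof
  assume "(x, y) \<in> rt (insert {a, b} T)" then show "(x, y) \<in> rt T \<or> ((x, a) \<in> rt T \<and> (b, y) \<in> rt T) \<or> ((x, b) \<in> rt T \<and> (a, y) \<in> rt T)"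
    by (rule rt_insert)
next
  have ab: "(a, b) \<in> rt (insert {a, b} T)" "(b, a) \<in> rt (insert {a, b} T)"
    using rt_insert_edge rt_sym by blast+
  assume "(x, y) \<in> rt T \<or> ((x, a) \<in> rt T \<and> (b, y) \<in> rt T) \<or> ((x, b) \<in> rt T \<and> (a, y) \<in> rt T)"
  then show "(x, y) \<in> rt (insert {a, b} T)"
    using ab rt_insert_mono by (meson rt_trans)
qed

lemma is_graph_finite: "is_graph V E \<Longrightarrow> finite E"
proof -
  assume g: "is_graph V E"
  then have "E \<subseteq> Pow V" unfolding is_graph_def by auto
  moreover have "finite V" using g unfolding is_graph_def by auto
  ultimately show ?thesis by (meson finite_Pow_iff finite_subset)
qed

lemma cls_self: "a \<in> V \<Longrightarrow> a \<in> cls V T a"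
  unfolding cls_def by auto

lemma cls_eq: "z \<in> cls V T a \<Longrightarrow> cls V T z = cls V T a"
  unfolding cls_def by (auto intro: rt_trans rt_sym)

lemma cls_eq_iff: "a \<in> V \<Longrightarrow> b \<in> V \<Longrightarrow> cls V T a = cls V T b \<longleftrightarrow> (a, b) \<in> rt T"
proof
  assume "a \<in> V" "b \<in> V" "cls V T a = cls V T b"
  then have "b \<in> cls V T a" using cls_self by metis
  then show "(a, b) \<in> rt T" unfolding cls_def by auto
next
  assume "a \<in> V" "b \<in> V" "(a, b) \<in> rt T"
  then have "b \<in> cls V T a" unfolding cls_def by auto
  then show "cls V T a = cls V T b" using cls_eq by metis
qed

lemma classes_elem: "X \<in> classes V T \<Longrightarrow> z \<in> X \<Longrightarrow> X = cls V T z"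
  unfolding classes_def using cls_eq by blast

lemma classes_sub: "X \<in> classes V T \<Longrightarrow> X \<subseteq> V"
  unfolding classes_def cls_def by auto

lemma classes_finite: "finite V \<Longrightarrow> finite (classes V T)"
  unfolding classes_def by simp

lemma card_image_le_cong:
  fixes f :: "'a \<Rightarrow> 'b" and g :: "'a \<Rightarrow> 'c"
  assumes h: "\<And>x y. x \<in> A \<Longrightarrow> y \<in> A \<Longrightarrow> f x = f y \<longleftrightarrow> g x = g y" and fin: "finite A"
  shows "card (g ` A) \<le> card (f ` A)"
proof -
  define \<phi> where "\<phi> z = g (SOME x. x \<in> A \<and> f x = z)" for z
  have "g ` A = \<phi> ` (f ` A)"
  proof (intro equalityI subsetI)
    fix w assume "w \<in> g ` A"
    then obtain x where x: "x \<in> A" "w = g x" by auto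
    have "\<exists>y. y \<in> A \<and> f y = f x" using x by auto
    then have "(SOME y. y \<in> A \<and> f y = f x) \<in> A \<and> f (SOME y. y \<in> A \<and> f y = f x) = f x" by (rule someI_ex)
    then have "\<phi> (f x) = g x" unfolding \<phi>_def using h x by metis
    then show "w \<in> \<phi> ` (f ` A)" using x by (intro image_eqI[of _ \<phi> "f x"]) auto
  next
    fix w assume "w \<in> \<phi> ` (f ` A)"
    then obtain x where x: "x \<in> A" "w = \<phi> (f x)" by auto
    have "\<exists>y. y \<in> A \<and> f y = f x" using x by auto
    then have "(SOME y. y \<in> A \<and> f y = f x) \<in> A" by (metis (mono_tags, lifting) someI_ex)
    then show "w \<in> g ` A" unfolding x \<phi>_def by auto
  qed
  then show ?thesis using fin by (simp add: card_image_le)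
qed

lemma card_image_cong_eq:
  fixes f :: "'a \<Rightarrow> 'b" and g :: "'a \<Rightarrow> 'c"
  assumes "\<And>x y. x \<in> A \<Longrightarrow> y \<in> A \<Longrightarrow> f x = f y \<longleftrightarrow> g x = g y" "finite A"
  shows "card (f ` A) = card (g ` A)"
proof -
  have "card (g ` A) \<le> card (f ` A)" by (rule card_image_le_cong) (use assms in auto)
  moreover have "card (f ` A) \<le> card (g ` A)" by (rule card_image_le_cong) (use assms in auto)
  ultimately show ?thesis by simp
qed

inductive reach :: "nat set \<Rightarrow> nat set set \<Rightarrow> nat set set \<Rightarrow> bool" for V E where
  reach_empty: "reach V E {}"
| reach_step: "reach V E T \<Longrightarrow> {a, b} \<in> E \<Longrightarrow> a \<in> V \<Longrightarrow> b \<in> V \<Longrightarrow> (a, b) \<notin> rt T \<Longrightarrow> reach V E (insert {a, b} T)"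

lemma reach_sub: "reach V E T \<Longrightarrow> T \<subseteq> E"
  by (induction rule: reach.induct) auto

lemma reach_acyclic: "reach V E T \<Longrightarrow> acyclic_sg T"
proof (induction rule: reach.induct)
  case reach_empty
  then show ?case unfolding acyclic_sg_def by auto
next
  case (reach_step T a b)
  have ab: "a \<noteq> b" using reach_step(5) by auto
  have abT: "{a, b} \<notin> T" using reach_step(5) edge_in_rt by blast
  show ?case unfolding acyclic_sg_def
  proof (intro allI impI)
    fix c d assume cd: "{c, d} \<in> insert {a, b} T \<and> c \<noteq> d"
    show "(c, d) \<notin> rt (insert {a, b} T - {{c, d}})"
    proof (cases "{c, d} = {a, b}")
      case True
      then have "insert {a, b} T - {{c, d}} = T" using abT by auto
      moreover have "(c, d) \<in> rt T \<Longrightarrow> (a, b) \<in> rt T" using True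
        by (auto simp: doubleton_eq_iff intro: rt_sym)
      ultimately show ?thesis using reach_step(5) by auto
    next
      case False
      then have cdT: "{c, d} \<in> T" using cd by auto
      have eq: "insert {a, b} T - {{c, d}} = insert {a, b} (T - {{c, d}})" using False by auto
      have nK: "(c, d) \<notin> rt (T - {{c, d}})" using reach_step(6) cdT cd unfolding acyclic_sg_def by blast
      have sub: "\<And>x y. (x, y) \<in> rt (T - {{c, d}}) \<Longrightarrow> (x, y) \<in> rt T" by (rule rt_mono) auto
      have cdrt: "(c, d) \<in> rt T" "(d, c) \<in> rt T" using edge_in_rt[OF cdT] rt_sym by blast+
      show ?thesis
      proof
        assume "(c, d) \<in> rt (insert {a, b} T - {{c, d}})"
        then have "(c, d) \<in> rt (T - {{c, d}}) \<or> ((c, a) \<in> rt (T - {{c, d}}) \<and> (b, d) \<in> rt (T - {{c, d}}))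
           \<or> ((c, b) \<in> rt (T - {{c, d}}) \<and> (a, d) \<in> rt (T - {{c, d}}))"
          unfolding eq by (rule rt_insert)
        then have "(a, b) \<in> rt T" using nK sub cdrt by (meson rt_sym rt_trans)
        then show False using reach_step(5) by simp
      qed
    qed
  qed
qed

definition sig :: "nat \<Rightarrow> nat \<Rightarrow> nat \<Rightarrow> nat" where "sig u v x = (if x = v then u else x)"

definition qE :: "nat set set \<Rightarrow> (nat \<Rightarrow> nat) \<Rightarrow> nat set set" where
  "qE E rep = {{rep a, rep b} | a b. {a, b} \<in> E \<and> rep a \<noteq> rep b}"

definition rep_inv :: "nat set \<Rightarrow> nat set set \<Rightarrow> nat set set \<Rightarrow> (nat \<Rightarrow> nat) \<Rightarrow> bool" where
  "rep_inv V E T rep \<longleftrightarrow> (\<forall>x\<in>V. rep x \<in> V) \<and> (\<forall>x\<in>V. \<forall>y\<in>V. rep x = rep y \<longleftrightarrow> (x, y) \<in> rt T)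
     \<and> is_minor (rep ` V, qE E rep) (V, E)"

lemma sig_eq: "u \<noteq> v \<Longrightarrow> sig u v x = sig u v y \<longleftrightarrow> x = y \<or> (x = u \<and> y = v) \<or> (x = v \<and> y = u)"
  unfolding sig_def by auto

lemma rep_inv_empty: "is_graph V E \<Longrightarrow> rep_inv V E {} id"
proof -
  assume g: "is_graph V E"
  have rt0: "rt {} = Id" unfolding edge_rel_def by simp
  have "qE E id = E"
  proof (intro equalityI subsetI)
    fix e assume "e \<in> qE E id" then show "e \<in> E" unfolding qE_def by auto
  next
    fix e assume e: "e \<in> E"
    then obtain a b where "e = {a, b}" "a \<noteq> b" using g unfolding is_graph_def by blast
    then show "e \<in> qE E id" using e unfolding qE_def by auto
  qed
  then show ?thesis unfolding rep_inv_def is_minor_def rt0 by auto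
qed

lemma rep_inv_step:
  assumes inv: "rep_inv V E T rep" and ab: "{a, b} \<in> E" "a \<in> V" "b \<in> V" "(a, b) \<notin> rt T"
  shows "rep_inv V E (insert {a, b} T) (sig (rep a) (rep b) \<circ> rep)
     \<and> (sig (rep a) (rep b) \<circ> rep) ` V = rep ` V - {rep b} \<and> rep b \<in> rep ` V"
proof -
  define u where "u = rep a"
  define v where "v = rep b"
  have iff: "\<And>x y. x \<in> V \<Longrightarrow> y \<in> V \<Longrightarrow> rep x = rep y \<longleftrightarrow> (x, y) \<in> rt T" using inv unfolding rep_inv_def by blast
  have uv: "u \<noteq> v" using iff ab unfolding u_def v_def by blast
  have inV: "\<And>x. x \<in> V \<Longrightarrow> rep x \<in> V" using inv unfolding rep_inv_def by blast
  have minor: "is_minor (rep ` V, qE E rep) (V, E)" using inv unfolding rep_inv_def by blast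
  have img: "(sig u v \<circ> rep) ` V = rep ` V - {v}"
  proof (intro equalityI subsetI)
    fix w assume "w \<in> (sig u v \<circ> rep) ` V"
    then obtain x where x: "x \<in> V" "w = sig u v (rep x)" by auto
    then show "w \<in> rep ` V - {v}" using uv ab unfolding sig_def u_def by auto
  next
    fix w assume w: "w \<in> rep ` V - {v}"
    then obtain x where "x \<in> V" "w = rep x" by auto
    then show "w \<in> (sig u v \<circ> rep) ` V" using w unfolding sig_def by (auto intro!: image_eqI[of _ _ x])
  qed
  have iff2: "(sig u v \<circ> rep) x = (sig u v \<circ> rep) y \<longleftrightarrow> (x, y) \<in> rt (insert {a, b} T)" if xy: "x \<in> V" "y \<in> V" for x y
  proof -
    have "(sig u v \<circ> rep) x = (sig u v \<circ> rep) y \<longleftrightarrow> rep x = rep y \<or> (rep x = u \<and> rep y = v) \<or> (rep x = v \<and> rep y = u)"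
      using sig_eq[OF uv] by simp
    also have "\<dots> \<longleftrightarrow> (x, y) \<in> rt T \<or> ((x, a) \<in> rt T \<and> (y, b) \<in> rt T) \<or> ((x, b) \<in> rt T \<and> (y, a) \<in> rt T)"
      unfolding u_def v_def using iff xy ab by (metis (no_types, lifting))
    also have "\<dots> \<longleftrightarrow> (x, y) \<in> rt T \<or> ((x, a) \<in> rt T \<and> (b, y) \<in> rt T) \<or> ((x, b) \<in> rt T \<and> (a, y) \<in> rt T)"
      using rt_sym by blast
    also have "\<dots> \<longleftrightarrow> (x, y) \<in> rt (insert {a, b} T)" by (rule rt_insert_iff[symmetric])
    finally show ?thesis .
  qed
  have uvE: "{u, v} \<in> qE E rep" using ab uv unfolding qE_def u_def v_def by blast
  have qE2: "qE E (sig u v \<circ> rep) = {sig u v ` g | g. g \<in> qE E rep \<and> g \<noteq> {u, v}}"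
  proof (intro equalityI subsetI)
    fix e assume "e \<in> qE E (sig u v \<circ> rep)"
    then obtain c d where cd: "e = {sig u v (rep c), sig u v (rep d)}" "{c, d} \<in> E" "sig u v (rep c) \<noteq> sig u v (rep d)"
      unfolding qE_def by auto
    have 1: "rep c \<noteq> rep d" "{rep c, rep d} \<noteq> {u, v}" using cd(3) sig_eq[OF uv] by (auto simp: doubleton_eq_iff)
    have "{rep c, rep d} \<in> qE E rep" using cd 1 unfolding qE_def by blast
    moreover have "e = sig u v ` {rep c, rep d}" using cd(1) by simp
    ultimately show "e \<in> {sig u v ` g | g. g \<in> qE E rep \<and> g \<noteq> {u, v}}" using 1 by blast
  next
    fix e assume "e \<in> {sig u v ` g | g. g \<in> qE E rep \<and> g \<noteq> {u, v}}"
    then obtain g where g: "e = sig u v ` g" "g \<in> qE E rep" "g \<noteq> {u, v}" by auto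
    then obtain c d where cd: "g = {rep c, rep d}" "{c, d} \<in> E" "rep c \<noteq> rep d" unfolding qE_def by auto
    have "sig u v (rep c) \<noteq> sig u v (rep d)" using sig_eq[OF uv] cd g(3) by (auto simp: doubleton_eq_iff)
    then show "e \<in> qE E (sig u v \<circ> rep)" using g(1) cd unfolding qE_def by auto
  qed
  have ms: "minor_step (rep ` V - {v}, {sig u v ` g | g. g \<in> qE E rep \<and> g \<noteq> {u, v}}) (rep ` V, qE E rep)"
    using minor_step.contract[OF uvE uv, of "rep ` V"] unfolding sig_def[abs_def] by simp
  have "is_minor ((sig u v \<circ> rep) ` V, qE E (sig u v \<circ> rep)) (V, E)"
    unfolding img qE2 is_minor_def using ms minor unfolding is_minor_def
    by (rule converse_rtranclp_into_rtranclp)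
  moreover have "\<forall>x\<in>V. (sig u v \<circ> rep) x \<in> V" using inV ab unfolding sig_def u_def by auto
  moreover have "v \<in> rep ` V" unfolding v_def using ab by auto
  ultimately show ?thesis unfolding rep_inv_def u_def[symmetric] v_def[symmetric] using iff2 img ab by auto
qed

lemma reach_rep: assumes g: "is_graph V E" shows "reach V E T \<Longrightarrow> \<exists>rep. rep_inv V E T rep"
proof (induction rule: reach.induct)
  case reach_empty then show ?case using rep_inv_empty g by blast
next
  case (reach_step T a b)
  then obtain rep where "rep_inv V E T rep" by blast
  then show ?case using rep_inv_step[of V E T rep a b] reach_step by blast
qed

lemma card_classes_rep: "rep_inv V E T rep \<Longrightarrow> finite V \<Longrightarrow> card (classes V T) = card (rep ` V)"
  unfolding classes_def
  by (rule card_image_cong_eq) (auto simp: rep_inv_def cls_eq_iff)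

definition cross :: "nat set set \<Rightarrow> nat set set \<Rightarrow> nat set set" where
  "cross E T = {g \<in> E. \<exists>a b. g = {a, b} \<and> (a, b) \<notin> rt T}"

lemma classes_dec:
  assumes g: "is_graph V E" and r: "reach V E T" and ab: "{a, b} \<in> E" "a \<in> V" "b \<in> V" "(a, b) \<notin> rt T"
  shows "card (classes V (insert {a, b} T)) < card (classes V T)"
proof -
  obtain rep where rep: "rep_inv V E T rep" using reach_rep[OF g r] by blast
  have fin: "finite V" using g unfolding is_graph_def by auto
  have st: "rep_inv V E (insert {a, b} T) (sig (rep a) (rep b) \<circ> rep)"
     "(sig (rep a) (rep b) \<circ> rep) ` V = rep ` V - {rep b}" "rep b \<in> rep ` V"
    using rep_inv_step[OF rep ab] by auto
  have "card (classes V (insert {a, b} T)) = card (rep ` V - {rep b})"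
    using card_classes_rep[OF st(1) fin] st(2) by simp
  also have "\<dots> < card (rep ` V)" by (rule card_Diff1_less) (use st(3) fin in auto)
  also have "\<dots> = card (classes V T)" using card_classes_rep[OF rep fin] by simp
  finally show ?thesis .
qed

lemma super_edge_elem:
  assumes "g \<in> super_edge E X Y"
  obtains a b where "g = {a, b}" "a \<in> X" "b \<in> Y" "g \<in> E"
  using assms unfolding super_edge_def by auto

lemma classes_neq_not_rt:
  assumes "X \<in> classes V T" "Y \<in> classes V T" "X \<noteq> Y" "a \<in> X" "b \<in> Y"
  shows "(a, b) \<notin> rt T"
proof
  assume "(a, b) \<in> rt T"
  have "X = cls V T a" "Y = cls V T b" using classes_elem assms by auto
  moreover have "a \<in> V" "b \<in> V" using classes_sub assms by auto
  ultimately show False using cls_eq_iff \<open>(a, b) \<in> rt T\<close> assms(3) by metis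
qed

lemma cross_dec:
  assumes fin: "finite E" and XY: "X \<in> classes V T" "Y \<in> classes V T" "X \<noteq> Y" and e: "e \<in> super_edge E X Y"
  shows "card (cross E (insert e T)) + card (super_edge E X Y) \<le> card (cross E T)"
proof -
  obtain a b where ab: "e = {a, b}" "a \<in> X" "b \<in> Y" "e \<in> E" using e by (rule super_edge_elem)
  have X: "X = cls V T a" and Y: "Y = cls V T b" using classes_elem XY ab by auto
  have sub1: "super_edge E X Y \<subseteq> cross E T"
  proof
    fix g assume g: "g \<in> super_edge E X Y"
    then obtain x y where xy: "g = {x, y}" "x \<in> X" "y \<in> Y" "g \<in> E" by (rule super_edge_elem)
    then show "g \<in> cross E T" unfolding cross_def using classes_neq_not_rt[OF XY xy(2,3)] by auto
  qed
  have sub2: "cross E (insert e T) \<subseteq> cross E T - super_edge E X Y"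
  proof
    fix g assume g: "g \<in> cross E (insert e T)"
    then obtain x y where xy: "g = {x, y}" "(x, y) \<notin> rt (insert e T)" "g \<in> E" unfolding cross_def by auto
    have "(x, y) \<notin> rt T" using xy(2) rt_insert_mono by blast
    then have "g \<in> cross E T" using xy unfolding cross_def by auto
    moreover have "g \<notin> super_edge E X Y"
    proof
      assume "g \<in> super_edge E X Y"
      then obtain x' y' where x'y': "g = {x', y'}" "x' \<in> X" "y' \<in> Y" by (rule super_edge_elem)
      have "(x', a) \<in> rt T" "(b, y') \<in> rt T" using x'y' ab X Y unfolding cls_def by (auto intro: rt_sym)
      then have "(x', y') \<in> rt (insert e T)" unfolding ab(1) using rt_insert_iff by blast
      then have "(x, y) \<in> rt (insert e T)" using xy(1) x'y'(1) by (auto simp: doubleton_eq_iff intro: rt_sym)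
      then show False using xy(2) by simp
    qed
    ultimately show "g \<in> cross E T - super_edge E X Y" by simp
  qed
  have fc: "finite (cross E T)" using fin unfolding cross_def by simp
  have "card (cross E (insert e T)) \<le> card (cross E T - super_edge E X Y)"
    using sub2 fc by (intro card_mono) auto
  also have "\<dots> = card (cross E T) - card (super_edge E X Y)"
    using sub1 fc by (simp add: card_Diff_subset finite_subset)
  moreover have "card (super_edge E X Y) \<le> card (cross E T)" by (rule card_mono[OF fc sub1])
  ultimately show ?thesis by linarith
qed

lemma cross_empty: "is_graph V E \<Longrightarrow> cross E {} = E"
proof -
  assume g: "is_graph V E"
  have rt0: "rt {} = Id" unfolding edge_rel_def by simp
  show ?thesis unfolding cross_def rt0 using g unfolding is_graph_def by fastforce
qed

lemma leave:
  assumes "(x, y) \<in> rt R" "x \<in> X" "y \<notin> X"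
  shows "\<exists>c d. {c, d} \<in> R \<and> c \<in> X \<and> d \<notin> X"
proof -
  have "y \<notin> X \<longrightarrow> (\<exists>c d. {c, d} \<in> R \<and> c \<in> X \<and> d \<notin> X)" using assms(1)
  proof (induction rule: rtrancl_induct)
    case base then show ?case using assms(2) by simp
  next
    case (step y z)
    show ?case
    proof
      assume z: "z \<notin> X"
      show "\<exists>c d. {c, d} \<in> R \<and> c \<in> X \<and> d \<notin> X"
      proof (cases "y \<in> X")
        case True
        then show ?thesis using step(2) z unfolding edge_rel_def by auto
      next
        case False
        then show ?thesis using step(3) by simp
      qed
    qed
  qed
  then show ?thesis using assms(3) by simp
qed

lemma nbhd_card:
  assumes X: "X \<in> classes V T"
  shows "deg V E T X = card {Y \<in> classes V T. Y \<noteq> X \<and> super_edge E X Y \<noteq> {}}"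
proof -
  have "nbhd V E T X = super_edge E X ` {Y \<in> classes V T. Y \<noteq> X \<and> super_edge E X Y \<noteq> {}}"
    unfolding nbhd_def by auto
  moreover have "inj_on (super_edge E X) {Y \<in> classes V T. Y \<noteq> X \<and> super_edge E X Y \<noteq> {}}"
  proof (rule inj_onI)
    fix Y1 Y2 assume Y1: "Y1 \<in> {Y \<in> classes V T. Y \<noteq> X \<and> super_edge E X Y \<noteq> {}}"
      and Y2: "Y2 \<in> {Y \<in> classes V T. Y \<noteq> X \<and> super_edge E X Y \<noteq> {}}" and eq: "super_edge E X Y1 = super_edge E X Y2"
    obtain g where g: "g \<in> super_edge E X Y1" using Y1 by auto
    obtain a b where ab: "g = {a, b}" "a \<in> X" "b \<in> Y1" using g by (rule super_edge_elem)
    obtain a' b' where ab': "g = {a', b'}" "a' \<in> X" "b' \<in> Y2" using g eq by (metis super_edge_elem)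
    show "Y1 = Y2"
    proof (cases "a = a'")
      case True
      then have "b = b'" using ab ab' by (auto simp: doubleton_eq_iff)
      have "Y1 = cls V T b" using Y1 ab by (intro classes_elem) auto
      moreover have "Y2 = cls V T b" using Y2 ab' \<open>b = b'\<close> by (intro classes_elem) auto
      ultimately show ?thesis by simp
    next
      case False
      then have "b = a'" using ab ab' by (auto simp: doubleton_eq_iff)
      have "Y1 = cls V T b" using Y1 ab by (intro classes_elem) auto
      moreover have "X = cls V T b" using X ab' \<open>b = a'\<close> by (intro classes_elem) auto
      ultimately show ?thesis using Y1 by simp
    qed
  qed
  ultimately show ?thesis unfolding deg_def by (simp add: card_image)
qed

lemma card_pairs_le:
  fixes Q :: "nat set set"
  assumes fin: "finite Q" and Op: "Op \<subseteq> {(u, w). {u, w} \<in> Q \<and> u \<noteq> w}"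
  shows "card Op \<le> 2 * card Q"
proof -
  define O1 where "O1 = {(u, w). {u, w} \<in> Q \<and> u < w}"
  define O2 where "O2 = {(u, w). {u, w} \<in> Q \<and> w < u}"
  have sub: "Op \<subseteq> O1 \<union> O2" using Op unfolding O1_def O2_def by (auto simp: neq_iff)
  have c1: "card O1 \<le> card Q"
  proof (rule card_inj_on_le[where f="\<lambda>(u, w). {u, w}"])
    show "inj_on (\<lambda>(u, w). {u, w}) O1" unfolding O1_def by (rule inj_onI) (auto simp: doubleton_eq_iff)
    show "(\<lambda>(u, w). {u, w}) ` O1 \<subseteq> Q" unfolding O1_def by auto
  qed (rule fin)
  have c2: "card O2 \<le> card Q"
  proof (rule card_inj_on_le[where f="\<lambda>(u, w). {u, w}"])
    show "inj_on (\<lambda>(u, w). {u, w}) O2" unfolding O2_def by (rule inj_onI) (auto simp: doubleton_eq_iff)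
    show "(\<lambda>(u, w). {u, w}) ` O2 \<subseteq> Q" unfolding O2_def by auto
  qed (rule fin)
  have f1: "finite O1"
  proof (rule finite_surj[where f="\<lambda>g. (Min g, Max g)" and A=Q])
    show "finite Q" by (rule fin)
    show "O1 \<subseteq> (\<lambda>g. (Min g, Max g)) ` Q"
    proof
      fix x assume "x \<in> O1"
      then obtain u w where x: "x = (u, w)" "{u, w} \<in> Q" "u < w" unfolding O1_def by auto
      then show "x \<in> (\<lambda>g. (Min g, Max g)) ` Q" by (intro image_eqI[of _ _ "{u, w}"]) auto
    qed
  qed
  have f2: "finite O2"
  proof (rule finite_surj[where f="\<lambda>g. (Max g, Min g)" and A=Q])
    show "finite Q" by (rule fin)
    show "O2 \<subseteq> (\<lambda>g. (Max g, Min g)) ` Q"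
    proof
      fix x assume "x \<in> O2"
      then obtain u w where x: "x = (u, w)" "{u, w} \<in> Q" "w < u" unfolding O2_def by auto
      then show "x \<in> (\<lambda>g. (Max g, Min g)) ` Q" by (intro image_eqI[of _ _ "{u, w}"]) auto
    qed
  qed
  have "card Op \<le> card (O1 \<union> O2)" using sub f1 f2 by (intro card_mono) auto
  also have "\<dots> \<le> card O1 + card O2" by (rule card_Un_le)
  finally show ?thesis using c1 c2 by linarith
qed

lemma mindeg:
  assumes g: "is_graph V E" and F: "minor_closed F" "graph_family F" "sparse_family \<rho> F" "(V, E) \<in> F"
  and r: "reach V E T" and X: "X \<in> classes V T" and minX: "\<forall>Y\<in>classes V T. deg V E T X \<le> deg V E T Y"
  shows "real (deg V E T X) \<le> 2 * \<rho>"
proof -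
  obtain rep where rep: "rep_inv V E T rep" using reach_rep[OF g r] by blast
  have finV: "finite V" using g unfolding is_graph_def by auto
  have iff: "\<And>x y. x \<in> V \<Longrightarrow> y \<in> V \<Longrightarrow> rep x = rep y \<longleftrightarrow> (x, y) \<in> rt T" using rep unfolding rep_inv_def by blast
  have HF: "(rep ` V, qE E rep) \<in> F" using F(1) F(4) rep unfolding minor_closed_def rep_inv_def by blast
  have Hg: "is_graph (rep ` V) (qE E rep)" using HF F(2) unfolding graph_family_def by fastforce
  have finQ: "finite (qE E rep)" by (rule is_graph_finite[OF Hg])
  have sp: "real (card (qE E rep)) \<le> \<rho> * real (card (rep ` V))"
    using HF F(3) unfolding sparse_family_def sparse_graph_def by fastforce
  define cl where "cl = classes V T"
  have fincl: "finite cl" unfolding cl_def using classes_finite finV by blast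
  define B where "B Y = {Z \<in> cl. Z \<noteq> Y \<and> super_edge E Y Z \<noteq> {}}" for Y
  have degB: "deg V E T Y = card (B Y)" if "Y \<in> cl" for Y using nbhd_card[of Y V T E] that unfolding B_def cl_def by simp
  define h where "h Y = rep (SOME y. y \<in> Y)" for Y :: "nat set"
  have hprop: "h Y = rep y" if Y: "Y \<in> cl" and y: "y \<in> Y" for Y y
  proof -
    have "\<exists>y. y \<in> Y" using y by blast
    then have y': "(SOME y. y \<in> Y) \<in> Y" by (rule someI_ex)
    have e1: "Y = cls V T y" using classes_elem Y y unfolding cl_def by blast
    have e2: "Y = cls V T (SOME y. y \<in> Y)" using classes_elem Y y' unfolding cl_def by blast
    have "y \<in> V" "(SOME y. y \<in> Y) \<in> V" using classes_sub Y y y' unfolding cl_def by blast+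
    then show ?thesis unfolding h_def using iff cls_eq_iff e1 e2 by metis
  qed
  have clne: "Y \<noteq> {}" if "Y \<in> cl" for Y using that unfolding cl_def classes_def using cls_self by blast
  define Op where "Op = {(u, w). {u, w} \<in> qE E rep \<and> u \<noteq> w}"
  have "card (Sigma cl B) \<le> card Op"
  proof (rule card_inj_on_le[where f="\<lambda>(Y, Z). (h Y, h Z)"])
    show "inj_on (\<lambda>(Y, Z). (h Y, h Z)) (Sigma cl B)"
    proof (rule inj_onI)
      fix p1 p2 assume a0: "p1 \<in> Sigma cl B" "p2 \<in> Sigma cl B" "(\<lambda>(Y, Z). (h Y, h Z)) p1 = (\<lambda>(Y, Z). (h Y, h Z)) p2"
      obtain Y1 Z1 Y2 Z2 where p: "p1 = (Y1, Z1)" "p2 = (Y2, Z2)" by (cases p1, cases p2) auto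
      have a: "(Y1, Z1) \<in> Sigma cl B" "(Y2, Z2) \<in> Sigma cl B" "h Y1 = h Y2" "h Z1 = h Z2" using a0 p by auto
      have same: "Y = Y'" if YY: "Y \<in> cl" "Y' \<in> cl" "h Y = h Y'" for Y Y'
      proof -
        obtain y where y: "y \<in> Y" using clne YY by blast
        obtain y' where y': "y' \<in> Y'" using clne YY by blast
        have "rep y = rep y'" using hprop YY y y' by metis
        moreover have "y \<in> V" "y' \<in> V" using classes_sub YY y y' unfolding cl_def by blast+
        ultimately have "cls V T y = cls V T y'" using iff cls_eq_iff by metis
        then show ?thesis using classes_elem YY y y' unfolding cl_def by metis
      qed
      have "Z1 \<in> cl" "Z2 \<in> cl" using a unfolding B_def by auto
      then show "p1 = p2" using a same p by auto
    qed
    show "(\<lambda>(Y, Z). (h Y, h Z)) ` Sigma cl B \<subseteq> Op"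
    proof clarify
      fix Y Z assume a: "Y \<in> cl" "Z \<in> B Y"
      then have Z: "Z \<in> cl" "Z \<noteq> Y" "super_edge E Y Z \<noteq> {}" unfolding B_def by auto
      then obtain ge where "ge \<in> super_edge E Y Z" by blast
      then obtain c d where cd: "ge = {c, d}" "c \<in> Y" "d \<in> Z" "ge \<in> E" by (rule super_edge_elem)
      have hc: "h Y = rep c" "h Z = rep d" using hprop a Z cd by auto
      have "(c, d) \<notin> rt T" using classes_neq_not_rt[of Y V T Z c d] a Z cd unfolding cl_def by auto
      moreover have "c \<in> V" "d \<in> V" using classes_sub a Z cd unfolding cl_def by blast+
      ultimately have "rep c \<noteq> rep d" using iff by blast
      then show "(h Y, h Z) \<in> Op" unfolding Op_def qE_def hc using cd by blast
    qed
    have "Op \<subseteq> rep ` V \<times> rep ` V"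
    proof clarify
      fix u w assume "(u, w) \<in> Op"
      then have "{u, w} \<in> qE E rep" unfolding Op_def by auto
      then obtain a b where ab: "{a, b} \<in> E" "{u, w} = {rep a, rep b}" unfolding qE_def by blast
      then have "a \<in> V" "b \<in> V" using g unfolding is_graph_def by (auto simp: doubleton_eq_iff)
      with ab show "u \<in> rep ` V \<and> w \<in> rep ` V" by (auto simp: doubleton_eq_iff)
    qed
    then show "finite Op" using finV by (meson finite_SigmaI finite_imageI finite_subset)
  qed
  also have "\<dots> \<le> 2 * card (qE E rep)" by (rule card_pairs_le[OF finQ]) (auto simp: Op_def)
  finally have 1: "card (Sigma cl B) \<le> 2 * card (qE E rep)" .
  have finB: "\<forall>Y\<in>cl. finite (B Y)" using fincl unfolding B_def by auto
  have 2: "card (Sigma cl B) = (\<Sum>Y\<in>cl. deg V E T Y)" using card_SigmaI[OF fincl finB] degB by simp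
  have 3: "card cl * deg V E T X \<le> (\<Sum>Y\<in>cl. deg V E T Y)"
    using sum_bounded_below[of cl "deg V E T X" "deg V E T"] minX unfolding cl_def by simp
  have 4: "card cl = card (rep ` V)" unfolding cl_def by (rule card_classes_rep[OF rep finV])
  have "real (card cl) * real (deg V E T X) \<le> 2 * real (card (qE E rep))"
    using 1 2 3 by (metis (mono_tags, lifting) le_trans of_nat_le_iff of_nat_mult of_nat_numeral)
  also have "\<dots> \<le> 2 * (\<rho> * real (card cl))" using sp 4 by simp
  finally have "real (card cl) * real (deg V E T X) \<le> real (card cl) * (2 * \<rho>)" by (simp add: algebra_simps)
  moreover have "0 < card cl" using X fincl unfolding cl_def by (simp add: card_gt_0_iff) blast
  ultimately show ?thesis by simp
qed

lemma mod_decomp: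
  fixes j k s i q :: nat
  assumes "0 < k" "i < k" "j mod (k * s) = i + k * q"
  shows "j mod k = i \<and> (j div k) mod s = q"
proof -
  have e: "k * (j div k mod s) + j mod k = i + k * q" using assms(3) by (simp add: mod_mult2_eq)
  have "(k * (j div k mod s) + j mod k) mod k = j mod k" by simp
  moreover have "(i + k * q) mod k = i" using assms(2) by simp
  ultimately have 1: "j mod k = i" using e by simp
  then have "k * (j div k mod s) = k * q" using e by simp
  then show ?thesis using 1 assms(1) by simp
qed

lemma edge_in_V: "is_graph V E \<Longrightarrow> {a, b} \<in> E \<Longrightarrow> a \<in> V \<and> b \<in> V"
proof -
  assume g: "is_graph V E" and e: "{a, b} \<in> E"
  then obtain x y where "x \<in> V" "y \<in> V" "{a, b} = {x, y}" unfolding is_graph_def by blast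
  then show ?thesis by (auto simp: doubleton_eq_iff)
qed

lemma H_holds:
  assumes g: "is_graph V E" and F: "minor_closed F" "graph_family F" "sparse_family \<rho> F" "(V, E) \<in> F"
  and RE: "R \<subseteq> E" and conn: "connected_sg V R" and pol: "valid_policy V E pol"
  and r: "reach V E T" and TR: "T \<subseteq> R" and c2: "2 \<le> card (classes V T)"
  shows "\<exists>s c. pg R pol (\<lambda>T. reach V E T \<and> T \<subseteq> R) V (\<lambda>T. card (cross E T)) \<rho> T s c"
proof -
  have TE: "T \<subseteq> E" using reach_sub[OF r] .
  have finE: "finite E" using is_graph_finite[OF g] .
  have finV: "finite V" using g unfolding is_graph_def by auto
  define L where "L = pol T"
  define k where "k = length L"
  obtain X where X: "X \<in> classes V T" "\<forall>Y\<in>classes V T. deg V E T X \<le> deg V E T Y"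
      "set (map set L) = nbhd V E T X" "distinct (map set L)" "\<forall>l\<in>set L. distinct l"
    using pol TE c2 unfolding valid_policy_def L_def by blast
  have kdeg: "k = deg V E T X" unfolding k_def deg_def using X(3,4) distinct_card by fastforce
  have kr: "real k \<le> 2 * \<rho>" unfolding kdeg by (rule mindeg[OF g F r X(1) X(2)])
  have lists: "\<exists>Y\<in>classes V T. Y \<noteq> X \<and> set (L ! i) = super_edge E X Y \<and> set (L ! i) \<noteq> {}" if "i < k" for i
  proof -
    have "set (L ! i) \<in> set (map set L)" using that unfolding k_def by auto
    then show ?thesis using X(3) unfolding nbhd_def by auto
  qed
  have lens: "length (L ! i) = card (set (L ! i))" if "i < k" for i
    using X(5) that unfolding k_def by (simp add: distinct_card)
  obtain x0 where x0: "x0 \<in> V" "X = cls V T x0" using X(1) unfolding classes_def by auto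
  have "\<exists>Y\<in>classes V T. Y \<noteq> X"
  proof (rule ccontr)
    assume "\<not> ?thesis"
    then have "classes V T \<subseteq> {X}" by auto
    then have "card (classes V T) \<le> card {X}" by (intro card_mono) auto
    then have "card (classes V T) \<le> 1" by simp
    then show False using c2 by simp
  qed
  then obtain Y where Y: "Y \<in> classes V T" "Y \<noteq> X" by blast
  obtain y0 where y0: "y0 \<in> V" "Y = cls V T y0" using Y(1) unfolding classes_def by auto
  have y0X: "y0 \<notin> X"
  proof
    assume "y0 \<in> X"
    then have "X = cls V T y0" using classes_elem X(1) by blast
    then show False using Y y0 by simp
  qed
  have "(x0, y0) \<in> rt R" using conn x0 y0 unfolding connected_sg_def by blast
  then obtain c d where cd: "{c, d} \<in> R" "c \<in> X" "d \<notin> X" using leave[of x0 y0 R X] x0 cls_self y0X by blast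
  have dV: "d \<in> V" using cd RE edge_in_V[OF g] by blast
  define Yd where "Yd = cls V T d"
  have Yd: "Yd \<in> classes V T" "Yd \<noteq> X" using dV cd cls_self unfolding Yd_def classes_def by auto
  have "{c, d} \<in> super_edge E X Yd" using cd RE dV cls_self unfolding super_edge_def Yd_def by blast
  then have "super_edge E X Yd \<in> nbhd V E T X" using Yd unfolding nbhd_def by blast
  then have "super_edge E X Yd \<in> set ` set L" using X(3) by simp
  then obtain l where l: "l \<in> set L" "set l = super_edge E X Yd" by (auto simp del: set_map)
  then obtain i where i: "i < k" "L ! i = l" unfolding k_def by (auto simp: in_set_conv_nth)
  obtain q where q: "q < length l" "l ! q = {c, d}" using l \<open>{c, d} \<in> super_edge E X Yd\<close> by (metis in_set_conv_nth)
  define P where "P i \<longleftrightarrow> i < k \<and> (\<exists>q < length (L ! i). (L ! i) ! q \<in> R)" for i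
  have "P i" unfolding P_def using i q cd by auto
  then obtain i0 where i0: "P i0" "\<And>i. P i \<Longrightarrow> length (L ! i0) \<le> length (L ! i)"
    using ex_has_least_nat[of P i "\<lambda>i. length (L ! i)"] by blast
  obtain q0 where q0: "q0 < length (L ! i0)" "(L ! i0) ! q0 \<in> R" "i0 < k" using i0(1) unfolding P_def by blast
  define s where "s = length (L ! i0)"
  define cc where "cc = i0 + k * q0"
  have k0: "0 < k" using q0 by auto
  have s1: "1 \<le> s" using q0 unfolding s_def by auto
  have ccs: "cc < k * s"
  proof -
    have "cc < k + k * q0" unfolding cc_def using q0 by simp
    also have "\<dots> = k * (q0 + 1)" by (simp add: algebra_simps)
    also have "\<dots> \<le> k * s" using q0 unfolding s_def by (intro mult_left_mono) auto
    finally show ?thesis .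
  qed
  have hit: "rr_query L j \<in> R" if "j mod (k * s) = cc" for j
  proof -
    have "j mod k = i0 \<and> (j div k) mod s = q0" using mod_decomp[OF k0 q0(3)] that q0 unfolding cc_def by blast
    then show ?thesis using q0 unfolding rr_query_def Let_def k_def[symmetric] s_def by simp
  qed
  have step: "reach V E (insert (rr_query L J) T) \<and> insert (rr_query L J) T \<subseteq> R
      \<and> card (classes V (insert (rr_query L J) T)) < card (classes V T)
      \<and> card (cross E (insert (rr_query L J) T)) + s \<le> card (cross E T)" if J: "rr_query L J \<in> R" for J
  proof -
    define ii where "ii = J mod k"
    define l where "l = L ! ii"
    have ii: "ii < k" unfolding ii_def using k0 by simp
    obtain Y where Y: "Y \<in> classes V T" "Y \<noteq> X" "set l = super_edge E X Y" "set l \<noteq> {}"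
      using lists[OF ii] unfolding l_def by blast
    define e where "e = l ! ((J div k) mod length l)"
    have eq: "rr_query L J = e" unfolding rr_query_def Let_def e_def l_def ii_def k_def by simp
    have lpos: "0 < length l" using Y(4) by auto
    have el: "e \<in> set l" unfolding e_def using lpos by simp
    have "P ii" unfolding P_def using ii J eq el lpos e_def l_def by (metis mod_less_divisor)
    then have sl: "s \<le> length l" using i0(2) unfolding s_def l_def by blast
    have eS: "e \<in> super_edge E X Y" using el Y by simp
    then obtain a b where ab: "e = {a, b}" "a \<in> X" "b \<in> Y" "e \<in> E" by (rule super_edge_elem)
    have nab: "(a, b) \<notin> rt T" by (rule classes_neq_not_rt[OF X(1) Y(1) Y(2)[symmetric] ab(2,3)])
    have abV: "a \<in> V" "b \<in> V" using classes_sub X(1) Y(1) ab by blast+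
    have re: "reach V E (insert e T)" unfolding ab(1) by (rule reach_step[OF r]) (use ab abV nab in auto)
    have cdec: "card (classes V (insert e T)) < card (classes V T)"
      unfolding ab(1) by (rule classes_dec[OF g r]) (use ab abV nab in auto)
    have xdec: "card (cross E (insert e T)) + card (super_edge E X Y) \<le> card (cross E T)"
      by (rule cross_dec[OF finE X(1) Y(1) Y(2)[symmetric] eS])
    have "card (super_edge E X Y) = length l" using Y(3) lens[OF ii] unfolding l_def by simp
    then show ?thesis using re cdec xdec sl TR J eq by auto
  qed
  have sm: "s \<le> card (cross E T)"
  proof -
    have "rr_query L cc \<in> R" using hit ccs by simp
    then show ?thesis using step by fastforce
  qed
  show ?thesis unfolding pg_def
    apply (rule exI[of _ s], rule exI[of _ cc])
    using k0 kr s1 ccs hit sm step unfolding L_def[symmetric] k_def[symmetric] by auto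
qed

lemma discover_Some_R: "discover R L \<omega> k = Some J \<Longrightarrow> rr_query L J \<in> R"
  unfolding discover_def by (auto split: if_splits intro: LeastI_ex[where P="\<lambda>j. rr_query L j \<in> R \<and> \<omega> !! (k + j)", THEN conjunct1])

lemma solve_correct:
  assumes Hyp: "\<And>T. good T \<Longrightarrow> 2 \<le> card (classes V T) \<Longrightarrow> \<exists>s c. pg R pol good V m \<rho> T s c"
  shows "good T0 \<Longrightarrow> solve_fn V R pol n T0 k \<omega> = Some (T, k') \<Longrightarrow> good T \<and> card (classes V T) \<le> 1"
proof (induction n arbitrary: T0 k)
  case 0
  then show ?case by (auto split: if_splits)
next
  case (Suc n)
  show ?case
  proof (cases "card (classes V T0) \<le> 1")
    case True
    then show ?thesis using Suc.prems by auto
  next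
    case False
    then obtain J where J: "discover R (pol T0) \<omega> k = Some J"
      "solve_fn V R pol n (T0 \<union> {rr_query (pol T0) J}) (k + J + 1) \<omega> = Some (T, k')"
      using Suc.prems by (auto split: option.splits)
    have "rr_query (pol T0) J \<in> R" by (rule discover_Some_R[OF J(1)])
    moreover obtain s c where "pg R pol good V m \<rho> T0 s c" using Hyp Suc.prems(1) False by force
    ultimately have "good (insert (rr_query (pol T0) J) T0)" unfolding pg_def by blast
    then show ?thesis using Suc.IH J(2) by simp
  qed
qed

lemma spanning:
  assumes g: "is_graph V E" and r: "reach V E T" and c: "card (classes V T) \<le> 1"
  shows "spanning_tree V E T"
proof -
  have finV: "finite V" using g unfolding is_graph_def by auto
  have "connected_sg V T" unfolding connected_sg_def
  proof (intro ballI)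
    fix a b assume ab: "a \<in> V" "b \<in> V"
    have "cls V T a \<in> classes V T" "cls V T b \<in> classes V T" using ab unfolding classes_def by auto
    moreover have "\<forall>x\<in>classes V T. \<forall>y\<in>classes V T. x = y"
      using card_le_Suc0_iff_eq[OF classes_finite[OF finV, of T]] c by simp
    ultimately have "cls V T a = cls V T b" by blast
    then show "(a, b) \<in> rt T" using cls_eq_iff ab by blast
  qed
  then show ?thesis unfolding spanning_tree_def using reach_sub[OF r] reach_acyclic[OF r] by blast
qed

lemma SUP_min_nat: "(SUP N. min x (of_nat N)) = (x :: ennreal)"
proof (rule antisym)
  show "(SUP N. min x (of_nat N)) \<le> x" by (rule SUP_least) simp
next
  show "x \<le> (SUP N. min x (of_nat N))"
  proof (cases "x = \<infinity>")
    case True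
    have "x \<le> \<top>" by simp
    also have "\<top> = (SUP N. of_nat N :: ennreal)" by (rule ennreal_SUP_of_nat_eq_top[symmetric])
    also have "\<dots> = (SUP N. min x (of_nat N))" using True by simp
    finally show ?thesis .
  next
    case False
    then have "x < \<top>" by (simp add: top.not_eq_extremum)
    then obtain n where "x < of_nat n" using ennreal_Ex_less_of_nat by blast
    then have "min x (of_nat n) = x" by simp
    moreover have "min x (of_nat n) \<le> (SUP N. min x (of_nat N))" by (rule SUP_upper) simp
    ultimately show ?thesis by simp
  qed
qed

theorem lemma5:
  fixes p :: real
  assumes "0 \<le> p" and "p < 1/2"
  shows "\<exists>C::real. \<forall>(F :: (nat set \<times> nat set set) set) (\<rho>::real) V E R pol.
     graph_family F \<and> minor_closed F \<and> sparse_family \<rho> F \<and> (V, E) \<in> F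
     \<and> R \<subseteq> E \<and> connected_sg V R \<and> valid_policy V E pol \<longrightarrow>
       (\<integral>\<^sup>+ \<omega>. num_queries (SolveSparseFN V R pol \<omega>) \<partial>coin_space p)
           \<le> ennreal (C * \<rho> * real (card E))
     \<and> (AE \<omega> in coin_space p. \<exists>T k. SolveSparseFN V R pol \<omega> = Some (T, k)
           \<and> spanning_tree V E T \<and> T \<subseteq> R)"
proof (intro exI[of _ 4] allI impI)
  fix F :: "(nat set \<times> nat set set) set" and \<rho> :: real and V E R pol
  assume A: "graph_family F \<and> minor_closed F \<and> sparse_family \<rho> F \<and> (V, E) \<in> F
     \<and> R \<subseteq> E \<and> connected_sg V R \<and> valid_policy V E pol"
  have g: "is_graph V E" using A unfolding graph_family_def by fastforce
  have finV: "finite V" using g unfolding is_graph_def by auto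
  define good where "good T \<longleftrightarrow> reach V E T \<and> T \<subseteq> R" for T
  define m where "m T = card (cross E T)" for T
  have Hyp: "\<exists>s c. pg R pol good V m \<rho> T s c" if "good T" "2 \<le> card (classes V T)" for T
    using H_holds[OF g, of F \<rho> R pol T] A that unfolding good_def m_def by blast
  have good0: "good {}" unfolding good_def by (auto intro: reach_empty)
  have cl0: "card (classes V {}) \<le> card V + 1"
    using card_image_le[OF finV, of "cls V {}"] unfolding classes_def by simp
  have bN: "(\<integral>\<^sup>+\<omega>. min (qc V R pol (card V) {} \<omega>) (of_nat N) \<partial>CS (1 - p)) \<le> ennreal (4 * \<rho> * real (m {}))" for N
  proof (rule qc_bound)
    show "\<And>n T j. good T \<Longrightarrow> 2 \<le> card (classes V T) \<Longrightarrow> card (classes V T) \<le> n + 2 \<Longrightarrow>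
        (\<integral>\<^sup>+\<omega>. min (dc V R pol n T j \<omega>) (of_nat N) \<partial>CS (1 - p)) \<le> ennreal (Phi V R pol good m \<rho> p T j)"
      by (rule dc_bound) (use assms Hyp in auto)
  qed (use assms Hyp good0 cl0 in auto)
  have m0: "m {} = card E" unfolding m_def using cross_empty[OF g] by simp
  have cs: "coin_space p = CS (1 - p)" unfolding coin_space_def ..
  have nq: "num_queries (SolveSparseFN V R pol \<omega>) = qc V R pol (card V) {} \<omega>" for \<omega>
    unfolding SolveSparseFN_def qc_def ..
  have "(\<integral>\<^sup>+\<omega>. qc V R pol (card V) {} \<omega> \<partial>CS (1 - p)) = (\<integral>\<^sup>+\<omega>. (SUP N. min (qc V R pol (card V) {} \<omega>) (of_nat N)) \<partial>CS (1 - p))"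
    by (simp add: SUP_min_nat)
  also have "\<dots> = (SUP N. (\<integral>\<^sup>+\<omega>. min (qc V R pol (card V) {} \<omega>) (of_nat N) \<partial>CS (1 - p)))"
  proof (rule nn_integral_monotone_convergence_SUP)
    show "incseq (\<lambda>N \<omega>. min (qc V R pol (card V) {} \<omega>) (of_nat N :: ennreal))"
      unfolding incseq_def le_fun_def
    proof (intro allI impI)
      fix a b :: nat and x assume "a \<le> b"
      then show "min (qc V R pol (card V) {} x) (of_nat a) \<le> min (qc V R pol (card V) {} x) (of_nat b :: ennreal)"
        by (intro min.mono) auto
    qed
  qed measurable
  also have "\<dots> \<le> ennreal (4 * \<rho> * real (card E))" using bN m0 by (intro SUP_least) simp
  finally have int: "(\<integral>\<^sup>+\<omega>. qc V R pol (card V) {} \<omega> \<partial>CS (1 - p)) \<le> ennreal (4 * \<rho> * real (card E))" .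
  have "(\<integral>\<^sup>+\<omega>. qc V R pol (card V) {} \<omega> \<partial>CS (1 - p)) \<noteq> \<infinity>"
  proof
    assume "(\<integral>\<^sup>+\<omega>. qc V R pol (card V) {} \<omega> \<partial>CS (1 - p)) = \<infinity>"
    then have "\<infinity> \<le> ennreal (4 * \<rho> * real (card E))" using int by simp
    then show False by (simp add: top_unique)
  qed
  then have ae: "AE \<omega> in CS (1 - p). qc V R pol (card V) {} \<omega> \<noteq> \<infinity>"
    by (intro nn_integral_PInf_AE) measurable
  have "AE \<omega> in CS (1 - p). \<exists>T k. SolveSparseFN V R pol \<omega> = Some (T, k) \<and> spanning_tree V E T \<and> T \<subseteq> R"
  proof (rule AE_mp[OF ae], intro AE_I2 impI)
    fix \<omega> assume "qc V R pol (card V) {} \<omega> \<noteq> \<infinity>"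
    then obtain T k where Tk: "solve_fn V R pol (card V) {} 0 \<omega> = Some (T, k)"
      unfolding qc_def num_queries_def by (auto split: option.splits)
    have gT: "good T \<and> card (classes V T) \<le> 1"
      by (rule solve_correct[where good=good and V=V and R=R and pol=pol and m=m and \<rho>=\<rho>, OF Hyp good0 Tk])
    then have rT: "reach V E T" "T \<subseteq> R" "card (classes V T) \<le> 1" unfolding good_def by auto
    have sp: "spanning_tree V E T" "T \<subseteq> R" using spanning[OF g rT(1) rT(3)] rT(2) by auto
    have "SolveSparseFN V R pol \<omega> = Some (T, k)" unfolding SolveSparseFN_def by (rule Tk)
    then show "\<exists>T k. SolveSparseFN V R pol \<omega> = Some (T, k) \<and> spanning_tree V E T \<and> T \<subseteq> R"
      using sp by blast
  qed
  then show "(\<integral>\<^sup>+ \<omega>. num_queries (SolveSparseFN V R pol \<omega>) \<partial>coin_space p) \<le> ennreal (4 * \<rho> * real (card E))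
     \<and> (AE \<omega> in coin_space p. \<exists>T k. SolveSparseFN V R pol \<omega> = Some (T, k) \<and> spanning_tree V E T \<and> T \<subseteq> R)"
    using int unfolding cs nq by simp
qed

end
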